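(* Let $n\ge1$, $0\le N_b\le N_h$ with $N_b+N_h\le n$, $p\in[0,1]$, $N_l=N_h-N_b>0$. Let $X\subseteq\mathbb{Z}/n\mathbb{Z}$ with $|X|=N_l$, listed as $(x_i)_{i\in\mathbb{Z}/N_l\mathbb{Z}}$, and $\ell_i=\Delta_iX$. For every $(b_i)_{i}$ with $\sum_ib_i=N_b$ and $0\le b_i\le\ell_i/2$ for all $i$, $$\mathbb{P}^{n,N_b,N_h,p}\left(H^1=X\ \middle|\ X\subseteq H^0\text{ and } \forall i,\ |B^0\cap I_i|=|H^0\cap I_i|=b_i\right)=\prod_{i\in\mathbb{Z}/N_l\mathbb{Z}}\mathbb{P}^{\ell_i+1,b_i,b_i+1,p}\left(H^1=\{0\}\mid 0\in H^0\right)=\prod_{i\in\mathbb{Z}/N_l\mathbb{Z}}\frac{1}{b_i+1},$$ where $I_i$ denotes the $i$-th block, i.e. the set of vertices strictly between $x_i$ and $x_{i+1}$.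
   Context: Golf process on $\mathbb{Z}/m\mathbb{Z}$ under $\mathbb{P}^{m,N_b,N_h,p}$: initial configuration uniform among assignments with exactly $N_b$ balls (set $B^0$) and $N_h$ holes (set $H^0$), the rest neutral; clocks i.i.d. uniform on $[0,1]$; at its clock time each ball performs an independent random walk (step $+1$ w.p. $p$, $-1$ w.p. $1-p$) stopped at the first not-yet-filled hole, which it fills. $H^1$ is the set of holes never filled. With $\pi:\mathbb{Z}/n\mathbb{Z}\to\{1,\dots,n\}$ the canonical bijection, $X$ of size $k$ is listed as $(x_i)_{i\in\mathbb{Z}/k\mathbb{Z}}$ with $\pi(x_1)<\dots<\pi(x_k)=\pi(x_0)$; the $i$-th block is the set of vertices visited strictly between $x_i$ and $x_{i+1}$ when going in the increasing direction, and $\Delta_iX=\pi(x_{i+1})-\pi(x_i)-1\bmod n$ is its size. *)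

theory Defs
  imports Complex_Main
begin

text \<open>Vertices of Z/mZ are represented by the natural numbers 0..m-1 (residues).\<close>

definition golf_step :: "nat \<Rightarrow> nat \<Rightarrow> bool \<Rightarrow> nat" where
  "golf_step m s d = (if d then (s + 1) mod m else (s + m - 1) mod m)"

fun walk_pos :: "nat \<Rightarrow> nat \<Rightarrow> bool list \<Rightarrow> nat" where
  "walk_pos m s [] = s"
| "walk_pos m s (d # w) = walk_pos m (golf_step m s d) w"

definition walk_weight :: "real \<Rightarrow> bool list \<Rightarrow> real" where
  "walk_weight p w = p ^ length (filter id w) * (1 - p) ^ length (filter Not w)"

text \<open>Probability that the random walk started at s (step +1 w.p. p, -1 w.p. 1-p)
  first enters the set U (at a time \<ge> 1) at the vertex h.\<close>
definition hit_prob :: "nat \<Rightarrow> real \<Rightarrow> nat set \<Rightarrow> nat \<Rightarrow> nat \<Rightarrow> real" where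
  "hit_prob m p U s h =
     (\<Sum>k. \<Sum>w\<in>{w::bool list. length w = Suc k}.
        (if walk_pos m s w = h \<and> h \<in> U \<and> (\<forall>j. 1 \<le> j \<and> j \<le> k \<longrightarrow> walk_pos m s (take j w) \<notin> U)
         then walk_weight p w else 0))"

text \<open>Given the set U of unfilled holes and the balls listed in the order of their clocks,
  golf_dist m p U bs Y is the probability that the final set of unfilled holes is Y.\<close>
fun golf_dist :: "nat \<Rightarrow> real \<Rightarrow> nat set \<Rightarrow> nat list \<Rightarrow> nat set \<Rightarrow> real" where
  "golf_dist m p U [] Y = (if Y = U then 1 else 0)"
| "golf_dist m p U (b # bs) Y = (\<Sum>h\<in>U. hit_prob m p U b h * golf_dist m p (U - {h}) bs Y)"

definition golf_configs :: "nat \<Rightarrow> nat \<Rightarrow> nat \<Rightarrow> (nat set \<times> nat set) set" where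
  "golf_configs m Nb Nh = {(B, H). B \<subseteq> {..<m} \<and> H \<subseteq> {..<m} \<and> B \<inter> H = {} \<and> card B = Nb \<and> card H = Nh}"

definition ball_orders :: "nat set \<Rightarrow> nat list set" where
  "ball_orders B = {bs. distinct bs \<and> set bs = B}"

text \<open>P^{m,Nb,Nh,p}(E) for an event E on (B0, H0, H1). The i.i.d. uniform clocks induce
  a uniformly random order of the balls (ties have probability 0).\<close>
definition golfP :: "nat \<Rightarrow> nat \<Rightarrow> nat \<Rightarrow> real \<Rightarrow> (nat set \<Rightarrow> nat set \<Rightarrow> nat set \<Rightarrow> bool) \<Rightarrow> real" where
  "golfP m Nb Nh p E =
     (\<Sum>(B, H)\<in>golf_configs m Nb Nh.
        (\<Sum>bs\<in>ball_orders B. \<Sum>Y\<in>Pow H. if E B H Y then golf_dist m p H bs Y else 0)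
          / real (card (ball_orders B)))
     / real (card (golf_configs m Nb Nh))"

definition golfCP :: "nat \<Rightarrow> nat \<Rightarrow> nat \<Rightarrow> real \<Rightarrow> (nat set \<Rightarrow> nat set \<Rightarrow> nat set \<Rightarrow> bool)
    \<Rightarrow> (nat set \<Rightarrow> nat set \<Rightarrow> nat set \<Rightarrow> bool) \<Rightarrow> real" where
  "golfCP m Nb Nh p E C = golfP m Nb Nh p (\<lambda>B H Y. E B H Y \<and> C B H Y) / golfP m Nb Nh p C"

definition canon_pi :: "nat \<Rightarrow> nat \<Rightarrow> nat" where
  "canon_pi n x = (if x = 0 then n else x)"

text \<open>x_1, ..., x_k listed with increasing pi (list positions 0..k-1).\<close>
definition xlist :: "nat \<Rightarrow> nat set \<Rightarrow> nat list" where
  "xlist n X = map (\<lambda>a. a mod n) (sorted_list_of_set (canon_pi n ` X))"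

text \<open>x_i for i \<in> Z/kZ represented by {0..<k}; x_0 = x_k.\<close>
definition xpt :: "nat \<Rightarrow> nat set \<Rightarrow> nat \<Rightarrow> nat" where
  "xpt n X i = xlist n X ! ((i + card X - 1) mod card X)"

definition Delta :: "nat \<Rightarrow> nat set \<Rightarrow> nat \<Rightarrow> nat" where
  "Delta n X i = nat ((int (canon_pi n (xpt n X ((i + 1) mod card X)))
                      - int (canon_pi n (xpt n X i)) - 1) mod int n)"

definition block :: "nat \<Rightarrow> nat set \<Rightarrow> nat \<Rightarrow> nat set" where
  "block n X i = {(xpt n X i + j) mod n | j. 1 \<le> j \<and> j \<le> Delta n X i}"

end

theory Submission
  imports Defs "HOL-Combinatorics.Multiset_Permutations" "HOL-Library.FuncSet"
begin

lemma walk_pos_append: "walk_pos m s (u @ v) = walk_pos m (walk_pos m s u) v"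
  by (induction u arbitrary: s) auto

lemma walk_pos_snoc: "walk_pos m s (u @ [d]) = golf_step m (walk_pos m s u) d"
  by (simp add: walk_pos_append)

lemma walk_weight_append: "walk_weight p (u @ v) = walk_weight p u * walk_weight p v"
  by (simp add: walk_weight_def power_add)

lemma walk_weight_nonneg: "0 \<le> p \<Longrightarrow> p \<le> 1 \<Longrightarrow> 0 \<le> walk_weight p w"
  by (simp add: walk_weight_def)

lemma finite_len: "finite {w::bool list. length w = k}"
  using finite_lists_length_eq[of "UNIV :: bool set" k] by simp

lemma sum_split_lists:
  "(\<Sum>w\<in>{w::bool list. length w = a + b}. f w) =
   (\<Sum>u\<in>{u. length u = a}. \<Sum>v\<in>{v. length v = b}. f (u @ v))"
proof -
  have eq: "{w::bool list. length w = a + b} = (\<lambda>(u, v). u @ v) ` ({u. length u = a} \<times> {v. length v = b})"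
  proof (rule set_eqI, rule iffI)
    fix w :: "bool list" assume "w \<in> {w. length w = a + b}"
    then have "w = take a w @ drop a w" "length (take a w) = a" "length (drop a w) = b" by auto
    then show "w \<in> (\<lambda>(u, v). u @ v) ` ({u. length u = a} \<times> {v. length v = b})"
      by (metis (mono_tags, lifting) SigmaI case_prod_conv image_eqI mem_Collect_eq)
  qed auto
  have inj: "inj_on (\<lambda>(u, v). u @ v) ({u::bool list. length u = a} \<times> {v. length v = b})"
    by (auto simp: inj_on_def)
  show ?thesis
    unfolding eq by (subst sum.reindex[OF inj]) (simp add: sum.cartesian_product split_def)
qed

lemma len1: "{v::bool list. length v = Suc 0} = {[True], [False]}"
  by (auto simp: length_Suc_conv)

lemma sum_snoc_lists:
  "(\<Sum>w\<in>{w::bool list. length w = Suc k}. f w) =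
   (\<Sum>u\<in>{u. length u = k}. f (u @ [True]) + f (u @ [False]))"
  using sum_split_lists[where a=k and b=1 and f=f] by (simp add: len1 sum.distrib)

lemma weight_total:
  assumes "0 \<le> p" "p \<le> 1"
  shows "(\<Sum>w\<in>{w::bool list. length w = k}. walk_weight p w) = 1"
proof (induction k)
  case 0
  have "{w::bool list. length w = 0} = {[]}" by auto
  then show ?case by (simp add: walk_weight_def)
next
  case (Suc k)
  have "(\<Sum>w\<in>{w::bool list. length w = Suc k}. walk_weight p w)
      = (\<Sum>u\<in>{u::bool list. length u = k}. walk_weight p u)"
    by (simp add: sum_snoc_lists walk_weight_append walk_weight_def algebra_simps)
  then show ?case using Suc by simp
qed

lemma walk_rep_true: "m \<ge> 1 \<Longrightarrow> walk_pos m x (replicate (Suc j) True) = (x + Suc j) mod m"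
proof (induction j arbitrary: x)
  case 0 then show ?case by (simp add: golf_step_def)
next
  case (Suc j)
  have "walk_pos m x (replicate (Suc (Suc j)) True) = walk_pos m ((x + 1) mod m) (replicate (Suc j) True)"
    by (simp add: golf_step_def)
  also have "\<dots> = ((x + 1) mod m + Suc j) mod m" using Suc by simp
  also have "\<dots> = (x + 1 + Suc j) mod m" by (rule mod_add_left_eq)
  also have "\<dots> = (x + Suc (Suc j)) mod m" by simp
  finally show ?case .
qed

lemma walk_rep_false: "m \<ge> 1 \<Longrightarrow> walk_pos m x (replicate (Suc j) False) = (x + Suc j * (m - 1)) mod m"
proof (induction j arbitrary: x)
  case 0 then show ?case by (simp add: golf_step_def)
next
  case (Suc j)
  have "walk_pos m x (replicate (Suc (Suc j)) False) = walk_pos m ((x + (m - 1)) mod m) (replicate (Suc j) False)"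
    using Suc.prems by (simp add: golf_step_def)
  also have "\<dots> = ((x + (m - 1)) mod m + Suc j * (m - 1)) mod m" using Suc by simp
  also have "\<dots> = (x + (m - 1) + Suc j * (m - 1)) mod m" by (rule mod_add_left_eq)
  also have "x + (m - 1) + Suc j * (m - 1) = x + Suc (Suc j) * (m - 1)" by simp
  finally show ?case .
qed

lemma exists_true:
  assumes "m \<ge> 1" "h < m"
  shows "\<exists>j. j < m \<and> (x + Suc j) mod m = h"
proof -
  define a where "a = x mod m"
  have a: "a < m" using assms a_def by simp
  have x: "x = m * (x div m) + a" using a_def by simp
  define j where "j = (h + m - Suc a) mod m"
  have j: "j < m" using assms j_def by simp
  have "(x + Suc j) mod m = (x + 1 + j) mod m" by simp
  also have "\<dots> = (x + 1 + (h + m - Suc a)) mod m" unfolding j_def by (rule mod_add_right_eq)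
  also have "x + 1 + (h + m - Suc a) = m * (x div m + 1) + h"
  proof -
    have e1: "h + m - Suc a = h + (m - Suc a)" using a by simp
    have e2: "a + 1 + (m - Suc a) = m" using a by simp
    have "x + 1 + (h + m - Suc a) = m * (x div m) + (a + 1 + (m - Suc a)) + h"
      unfolding e1 by (subst x) simp
    also have "\<dots> = m * (x div m + 1) + h" unfolding e2 by simp
    finally show ?thesis .
  qed
  also have "(m * (x div m + 1) + h) mod m = h" using assms by (metis mod_mult_self3 mult.commute mod_less)
  finally show ?thesis using j by blast
qed

lemma exists_false:
  assumes "m \<ge> 1" "h < m"
  shows "\<exists>j. j < m \<and> (x + Suc j * (m - 1)) mod m = h"
proof -
  define a where "a = x mod m"
  have a: "a < m" using assms a_def by simp
  have x: "x = m * (x div m) + a" using a_def by simp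
  define q where "q = (a + m - Suc h) div m"
  define j where "j = (a + m - Suc h) mod m"
  have j: "j < m" using assms j_def by simp
  have jq: "int j = int a + int m - int h - 1 - int m * int q"
  proof -
    have "a + m - Suc h = m * q + j" unfolding q_def j_def by simp
    then have "int (a + m - Suc h) = int m * int q + int j" by simp
    moreover have "int (a + m - Suc h) = int a + int m - int h - 1" using assms by (simp add: of_nat_diff)
    ultimately show ?thesis by simp
  qed
  have "int (x + Suc j * (m - 1)) = int m * (int (x div m) + int j + int q) + int h"
  proof -
    have "int (x + Suc j * (m - 1)) = int x + int (Suc j) * int (m - 1)" by (simp only: of_nat_add of_nat_mult)
    also have "int (m - 1) = int m - 1" using assms by (simp add: of_nat_diff)
    also have "int (Suc j) = int j + 1" by simp
    finally have "int (x + Suc j * (m - 1)) = int x + (int j + 1) * (int m - 1)" .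
    also have "int x = int m * int (x div m) + int a" using x by (metis of_nat_add of_nat_mult)
    finally show ?thesis unfolding jq by (simp add: algebra_simps)
  qed
  then have "int ((x + Suc j * (m - 1)) mod m) = int h"
    using assms by (simp only: zmod_int) simp
  then show ?thesis using j by auto
qed

definition surv :: "nat \<Rightarrow> nat set \<Rightarrow> nat \<Rightarrow> nat \<Rightarrow> bool list \<Rightarrow> bool" where
  "surv m U s k w = (\<forall>j. 1 \<le> j \<and> j \<le> k \<longrightarrow> walk_pos m s (take j w) \<notin> U)"

definition Sv :: "nat \<Rightarrow> real \<Rightarrow> nat set \<Rightarrow> nat \<Rightarrow> nat \<Rightarrow> real" where
  "Sv m p U s k = (\<Sum>w\<in>{w. length w = k}. if surv m U s k w then walk_weight p w else 0)"

definition Av :: "nat \<Rightarrow> real \<Rightarrow> nat set \<Rightarrow> nat \<Rightarrow> nat \<Rightarrow> real" where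
  "Av m p U s k = (\<Sum>w\<in>{w. length w = Suc k}. if walk_pos m s w \<in> U \<and> surv m U s k w then walk_weight p w else 0)"

lemma surv_append: "length w = k \<Longrightarrow> surv m U s k (w @ v) = surv m U s k w"
  unfolding surv_def by auto

lemma surv_Suc: "length w = Suc k \<Longrightarrow> surv m U s (Suc k) w = (surv m U s k w \<and> walk_pos m s w \<notin> U)"
  unfolding surv_def by (auto simp: le_Suc_eq)

lemma surv_mono: "k' \<le> k \<Longrightarrow> surv m U s k w \<Longrightarrow> surv m U s k' w"
  unfolding surv_def by auto

lemma S_step: "Sv m p U s (Suc k) + Av m p U s k = Sv m p U s k"
proof -
  have "Sv m p U s (Suc k) + Av m p U s k =
     (\<Sum>w\<in>{w. length w = Suc k}. if surv m U s k w then walk_weight p w else 0)"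
    unfolding Sv_def Av_def sum.distrib[symmetric] by (rule sum.cong[OF refl]) (auto simp: surv_Suc)
  also have "\<dots> = (\<Sum>u\<in>{u. length u = k}. if surv m U s k u then walk_weight p u * 1 else 0)"
    by (subst sum_snoc_lists, rule sum.cong[OF refl])
       (auto simp: surv_append walk_weight_append walk_weight_def algebra_simps simp del: mult_1_right)
  also have "\<dots> = Sv m p U s k" unfolding Sv_def by (rule sum.cong) auto
  finally show ?thesis .
qed

lemma S_nonneg: "0 \<le> p \<Longrightarrow> p \<le> 1 \<Longrightarrow> 0 \<le> Sv m p U s k"
  unfolding Sv_def by (rule sum_nonneg) (auto simp: walk_weight_nonneg)

lemma A_nonneg: "0 \<le> p \<Longrightarrow> p \<le> 1 \<Longrightarrow> 0 \<le> Av m p U s k"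
  unfolding Av_def by (rule sum_nonneg) (auto simp: walk_weight_nonneg)

lemma S_0: "Sv m p U s 0 = 1"
proof -
  have "{w::bool list. length w = 0} = {[]}" by auto
  then show ?thesis by (simp add: Sv_def surv_def walk_weight_def)
qed

lemma A_partial: "(\<Sum>k<K. Av m p U s k) = 1 - Sv m p U s K"
proof (induction K)
  case 0 then show ?case by (simp add: S_0)
next
  case (Suc K) then show ?case using S_step[of m p U s K] by simp
qed

lemma S_antimono: assumes "0 \<le> p" "p \<le> 1" "k \<le> k'" shows "Sv m p U s k' \<le> Sv m p U s k"
  using assms(3)
proof (induction k' rule: dec_induct)
  case (step k')
  then show ?case using S_step[of m p U s k'] A_nonneg[OF assms(1,2), of m U s k'] by linarith
qed simp

lemma surv_not_const:
  assumes "m \<ge> 1" "U \<noteq> {}" "U \<subseteq> {..<m}" "length u = K" "length v = m"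
    and "surv m U s (K + m) (u @ v)"
  shows "surv m U s K u \<and> v \<noteq> replicate m True \<and> v \<noteq> replicate m False"
proof -
  have s1: "surv m U s K u" using surv_mono[OF _ assms(6), of K] surv_append[OF assms(4)] by auto
  obtain h where h: "h \<in> U" using assms(2) by blast
  then have hm: "h < m" using assms(3) by auto
  have tk: "\<And>j. j < m \<Longrightarrow> take (K + Suc j) (u @ v) = u @ take (Suc j) v" using assms(4) by simp
  have "v \<noteq> replicate m True"
  proof
    assume v: "v = replicate m True"
    obtain j where j: "j < m" "(walk_pos m s u + Suc j) mod m = h" using exists_true[OF assms(1) hm] by blast
    have "walk_pos m s (take (K + Suc j) (u @ v)) = h"
    proof -
      have mm: "min (Suc j) m = Suc j" using j by simp
      show ?thesis unfolding tk[OF j(1)] unfolding walk_pos_append v take_replicate mm walk_rep_true[OF assms(1)] using j(2) .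
    qed
    moreover have "1 \<le> K + Suc j \<and> K + Suc j \<le> K + m" using j by simp
    ultimately show False using assms(6) h unfolding surv_def by blast
  qed
  moreover have "v \<noteq> replicate m False"
  proof
    assume v: "v = replicate m False"
    obtain j where j: "j < m" "(walk_pos m s u + Suc j * (m - 1)) mod m = h" using exists_false[OF assms(1) hm] by blast
    have "walk_pos m s (take (K + Suc j) (u @ v)) = h"
    proof -
      have mm: "min (Suc j) m = Suc j" using j by simp
      show ?thesis unfolding tk[OF j(1)] unfolding walk_pos_append v take_replicate mm walk_rep_false[OF assms(1)] using j(2) .
    qed
    moreover have "1 \<le> K + Suc j \<and> K + Suc j \<le> K + m" using j by simp
    ultimately show False using assms(6) h unfolding surv_def by blast
  qed
  ultimately show ?thesis using s1 by blast
qed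

lemma nonconst_weight:
  assumes "m \<ge> 1" "0 \<le> p" "p \<le> 1"
  shows "(\<Sum>v\<in>{v::bool list. length v = m}. if v \<in> {replicate m True, replicate m False} then 0 else walk_weight p v)
     = 1 - p ^ m - (1 - p) ^ m"
proof -
  let ?L = "{v::bool list. length v = m}" and ?R = "{replicate m True, replicate m False}"
  have RL: "?R \<subseteq> ?L" by auto
  have ne: "replicate m True \<noteq> replicate m False" using assms(1) by (cases m) auto
  have "(\<Sum>v\<in>?L. walk_weight p v) = (\<Sum>v\<in>?L. if v \<in> ?R then walk_weight p v else 0) + (\<Sum>v\<in>?L. if v \<in> ?R then 0 else walk_weight p v)"
    by (simp add: sum.distrib[symmetric] if_distrib cong: if_cong)
  moreover have "(\<Sum>v\<in>?L. if v \<in> ?R then walk_weight p v else 0) = (\<Sum>v\<in>?R. walk_weight p v)"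
    by (rule sum.mono_neutral_cong_right[OF finite_len RL]) auto
  moreover have "(\<Sum>v\<in>?R. walk_weight p v) = p ^ m + (1 - p) ^ m"
    using ne by (simp add: walk_weight_def)
  moreover have "(\<Sum>v\<in>?L. walk_weight p v) = 1" using weight_total assms by blast
  ultimately show ?thesis by linarith
qed

lemma S_contract:
  assumes "m \<ge> 1" "0 \<le> p" "p \<le> 1" "U \<noteq> {}" "U \<subseteq> {..<m}"
  shows "Sv m p U s (K + m) \<le> (1 - p ^ m - (1 - p) ^ m) * Sv m p U s K"
proof -
  let ?R = "{replicate m True, replicate m False}"
  have "Sv m p U s (K + m) = (\<Sum>u\<in>{u. length u = K}. \<Sum>v\<in>{v. length v = m}.
          if surv m U s (K + m) (u @ v) then walk_weight p u * walk_weight p v else 0)"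
    unfolding Sv_def by (subst sum_split_lists) (simp only: walk_weight_append)
  also have "\<dots> \<le> (\<Sum>u\<in>{u. length u = K}. \<Sum>v\<in>{v::bool list. length v = m}.
          if surv m U s K u then walk_weight p u * (if v \<in> ?R then 0 else walk_weight p v) else 0)"
  proof (intro sum_mono)
    fix u v :: "bool list" assume "u \<in> {u. length u = K}" "v \<in> {v. length v = m}"
    then show "(if surv m U s (K + m) (u @ v) then walk_weight p u * walk_weight p v else 0)
        \<le> (if surv m U s K u then walk_weight p u * (if v \<in> ?R then 0 else walk_weight p v) else 0)"
      using surv_not_const[OF assms(1,4,5), of u K v s] walk_weight_nonneg[OF assms(2,3)]
      by (auto simp: mult_nonneg_nonneg)
  qed
  also have "\<dots> = (\<Sum>u\<in>{u. length u = K}. if surv m U s K u then walk_weight p u * (1 - p ^ m - (1 - p) ^ m) else 0)"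
    by (rule sum.cong[OF refl]) (use nonconst_weight[OF assms(1,2,3)] in \<open>simp add: sum_distrib_left[symmetric]\<close>)
  also have "\<dots> = (1 - p ^ m - (1 - p) ^ m) * Sv m p U s K"
    unfolding Sv_def sum_distrib_left by (rule sum.cong) auto
  finally show ?thesis .
qed

lemma S_tendsto:
  assumes "m \<ge> 1" "0 \<le> p" "p \<le> 1" "U \<noteq> {}" "U \<subseteq> {..<m}"
  shows "(\<lambda>K. Sv m p U s K) \<longlonglongrightarrow> 0"
proof -
  define c where "c = 1 - p ^ m - (1 - p) ^ m"
  have c0: "0 \<le> c"
  proof -
    have "0 \<le> (\<Sum>v\<in>{v::bool list. length v = m}. if v \<in> {replicate m True, replicate m False} then 0 else walk_weight p v)"
      by (rule sum_nonneg) (simp add: walk_weight_nonneg[OF assms(2,3)])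
    then show ?thesis using nonconst_weight[OF assms(1,2,3)] c_def by simp
  qed
  have c1: "c < 1"
  proof (cases "p > 0")
    case True
    have "0 < p ^ m" using True by simp
    moreover have "0 \<le> (1 - p) ^ m" using assms by simp
    ultimately show ?thesis using c_def by linarith
  next
    case False then have "p = 0" using assms by simp
    then show ?thesis using c_def assms by (simp add: power_0_left)
  qed
  have pw: "Sv m p U s (j * m) \<le> c ^ j" for j
  proof (induction j)
    case 0 then show ?case by (simp add: S_0)
  next
    case (Suc j)
    have "Sv m p U s (Suc j * m) = Sv m p U s (j * m + m)" by (simp add: add.commute)
    also have "\<dots> \<le> c * Sv m p U s (j * m)" using S_contract[OF assms] c_def by blast
    also have "\<dots> \<le> c * c ^ j" using Suc c0 by (simp add: mult_left_mono)
    finally show ?case by simp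
  qed
  show ?thesis
  proof (rule LIMSEQ_I)
    fix r :: real assume r: "0 < r"
    obtain j where j: "c ^ j < r" using real_arch_pow_inv[OF r c1] by blast
    show "\<exists>no. \<forall>n\<ge>no. norm (Sv m p U s n - 0) < r"
    proof (intro exI allI impI)
      fix n assume "j * m \<le> n"
      then have "Sv m p U s n \<le> Sv m p U s (j * m)" using S_antimono assms by blast
      then show "norm (Sv m p U s n - 0) < r" using pw[of j] j S_nonneg[OF assms(2,3)] by simp
    qed
  qed
qed

lemma A_sums:
  assumes "m \<ge> 1" "0 \<le> p" "p \<le> 1" "U \<noteq> {}" "U \<subseteq> {..<m}"
  shows "(\<lambda>k. Av m p U s k) sums 1"
proof -
  have "(\<lambda>K. 1 - Sv m p U s K) \<longlonglongrightarrow> 1 - 0"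
    by (intro tendsto_diff tendsto_const S_tendsto[OF assms])
  then show ?thesis unfolding sums_def A_partial by simp
qed

lemma hit_mass:
  assumes "m \<ge> 1" "0 \<le> p" "p \<le> 1" "U \<noteq> {}" "U \<subseteq> {..<m}"
  shows "(\<Sum>h\<in>U. hit_prob m p U s h) = 1"
proof -
  have fU: "finite U" using assms(5) finite_subset by blast
  define T where "T h k = (\<Sum>w\<in>{w::bool list. length w = Suc k}.
        (if walk_pos m s w = h \<and> h \<in> U \<and> (\<forall>j. 1 \<le> j \<and> j \<le> k \<longrightarrow> walk_pos m s (take j w) \<notin> U)
         then walk_weight p w else 0))" for h k
  have hp: "hit_prob m p U s h = (\<Sum>k. T h k)" for h unfolding hit_prob_def T_def by simp
  have T0: "0 \<le> T h k" for h k unfolding T_def by (rule sum_nonneg) (simp add: walk_weight_nonneg[OF assms(2,3)])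
  have TA: "(\<Sum>h\<in>U. T h k) = Av m p U s k" for k
  proof -
    have "(\<Sum>h\<in>U. T h k) = (\<Sum>w\<in>{w::bool list. length w = Suc k}. \<Sum>h\<in>U.
        (if h = walk_pos m s w then (if surv m U s k w then walk_weight p w else 0) else 0))"
      unfolding T_def surv_def by (subst sum.swap) (rule sum.cong[OF refl], rule sum.cong[OF refl], auto)
    also have "\<dots> = Av m p U s k" unfolding Av_def using fU by (simp add: sum.delta, intro sum.cong) auto
    finally show ?thesis .
  qed
  have sT: "summable (T h)" if "h \<in> U" for h
  proof (rule summable_comparison_test'[where N=0])
    show "summable (Av m p U s)" using A_sums[OF assms] sums_summable by blast
    fix k :: nat
    have "T h k \<le> (\<Sum>h\<in>U. T h k)" using that fU T0 by (intro member_le_sum) auto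
    then show "norm (T h k) \<le> Av m p U s k" using T0[of h k] TA by simp
  qed
  have "(\<Sum>h\<in>U. hit_prob m p U s h) = (\<Sum>h\<in>U. \<Sum>k. T h k)" using hp by simp
  also have "\<dots> = (\<Sum>k. \<Sum>h\<in>U. T h k)" using suminf_sum[of U T] sT by simp
  also have "\<dots> = (\<Sum>k. Av m p U s k)" using TA by simp
  also have "\<dots> = 1" using A_sums[OF assms] sums_unique by metis
  finally show ?thesis .
qed

definition G :: "nat \<Rightarrow> real \<Rightarrow> nat set \<Rightarrow> nat set \<Rightarrow> nat set \<Rightarrow> real" where
  "G m p U B Y = (\<Sum>bs\<in>ball_orders B. golf_dist m p U bs Y) / real (card (ball_orders B))"

lemma ball_orders_perm: "ball_orders B = permutations_of_set B"
  by (auto simp: ball_orders_def permutations_of_set_def)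

lemma G_empty: "G m p U {} Y = (if Y = U then 1 else 0)"
  by (simp add: G_def ball_orders_perm)

lemma sum_orders_rec:
  assumes "finite B" "B \<noteq> {}"
  shows "(\<Sum>bs\<in>permutations_of_set B. f bs) = (\<Sum>b\<in>B. \<Sum>bs\<in>permutations_of_set (B - {b}). f (b # bs))"
proof -
  have "(\<Sum>bs\<in>permutations_of_set B. f bs) = (\<Sum>bs\<in>(\<Union>x\<in>B. (\<lambda>xs. x # xs) ` permutations_of_set (B - {x})). f bs)"
    using permutations_of_set_nonempty[OF assms(2)] by simp
  also have "\<dots> = (\<Sum>b\<in>B. \<Sum>bs\<in>(\<lambda>xs. b # xs) ` permutations_of_set (B - {b}). f bs)"
    by (rule sum.UNION_disjoint) (use assms in auto)
  also have "\<dots> = (\<Sum>b\<in>B. \<Sum>bs\<in>permutations_of_set (B - {b}). f (b # bs))"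
    by (rule sum.cong[OF refl], subst sum.reindex) (auto simp: inj_on_def)
  finally show ?thesis .
qed

lemma G_rec:
  assumes "finite B" "B \<noteq> {}"
  shows "G m p U B Y = (\<Sum>b\<in>B. \<Sum>h\<in>U. hit_prob m p U b h * G m p (U - {h}) (B - {b}) Y) / real (card B)"
proof -
  have cB: "card B = Suc (card B - 1)" using assms by (simp add: card_gt_0_iff Suc_pred')
  have cb: "\<And>b. b \<in> B \<Longrightarrow> card (B - {b}) = card B - 1" using assms by simp
  have "(\<Sum>bs\<in>permutations_of_set B. golf_dist m p U bs Y)
     = (\<Sum>b\<in>B. \<Sum>bs\<in>permutations_of_set (B - {b}). \<Sum>h\<in>U. hit_prob m p U b h * golf_dist m p (U - {h}) bs Y)"
    by (subst sum_orders_rec[OF assms]) simp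
  also have "\<dots> = (\<Sum>b\<in>B. \<Sum>h\<in>U. hit_prob m p U b h * G m p (U - {h}) (B - {b}) Y * fact (card B - 1))"
    apply (rule sum.cong[OF refl])
    apply (subst sum.swap)
    apply (rule sum.cong[OF refl])
    using assms cb by (simp add: G_def ball_orders_perm sum_distrib_left)
  finally have e: "(\<Sum>bs\<in>permutations_of_set B. golf_dist m p U bs Y) =
     (\<Sum>b\<in>B. \<Sum>h\<in>U. hit_prob m p U b h * G m p (U - {h}) (B - {b}) Y) * fact (card B - 1)"
    by (simp add: sum_distrib_right)
  have f: "(fact (card B) :: real) = real (card B) * fact (card B - 1)"
    by (subst cB) (simp del: of_nat_Suc add: cB[symmetric], use cB in simp)
  show ?thesis
    unfolding G_def ball_orders_perm card_permutations_of_set[OF assms(1)] e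
    by (simp add: f)
qed

lemma golf_dist_supp:
  "finite U \<Longrightarrow> golf_dist m p U bs Y \<noteq> 0 \<Longrightarrow> Y \<subseteq> U \<and> card Y + length bs = card U"
proof (induction bs arbitrary: U)
  case Nil then show ?case by (auto split: if_splits)
next
  case (Cons b bs)
  then obtain h where h: "h \<in> U" "golf_dist m p (U - {h}) bs Y \<noteq> 0"
    by (auto elim: sum.not_neutral_contains_not_neutral)
  with Cons.IH[of "U - {h}"] Cons.prems have "Y \<subseteq> U - {h} \<and> card Y + length bs = card (U - {h})" by auto
  moreover have "card U \<ge> 1" using h(1) Cons.prems(1) by (metis One_nat_def Suc_leI card_gt_0_iff empty_iff)
  ultimately show ?case using h Cons.prems by auto
qed

lemma G_supp:
  assumes "finite U" "G m p U B Y \<noteq> 0"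
  shows "Y \<subseteq> U \<and> card Y + card B = card U"
proof -
  from assms(2) obtain bs where bs: "bs \<in> ball_orders B" "golf_dist m p U bs Y \<noteq> 0"
    unfolding G_def by (auto elim: sum.not_neutral_contains_not_neutral)
  then have "length bs = card B" by (simp add: ball_orders_perm length_finite_permutations_of_set)
  with golf_dist_supp[OF assms(1) bs(2)] show ?thesis by simp
qed

lemma G_zero: "finite U \<Longrightarrow> \<not> Y \<subseteq> U \<Longrightarrow> G m p U B Y = 0"
  using G_supp by blast

lemma golf_dist_mass:
  assumes "m \<ge> 1" "0 \<le> p" "p \<le> 1" "H \<subseteq> {..<m}" "U \<subseteq> H" "length bs < card U"
  shows "(\<Sum>Y\<in>Pow H. golf_dist m p U bs Y) = 1"
  using assms(5,6)
proof (induction bs arbitrary: U)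
  case Nil
  have "finite H" using assms(4) finite_subset by blast
  then show ?case using Nil by (simp add: sum.delta')
next
  case (Cons b bs)
  have fH: "finite H" using assms(4) finite_subset by blast
  have fU: "finite U" using Cons.prems fH finite_subset by blast
  have "(\<Sum>Y\<in>Pow H. golf_dist m p U (b # bs) Y) = (\<Sum>h\<in>U. hit_prob m p U b h * (\<Sum>Y\<in>Pow H. golf_dist m p (U - {h}) bs Y))"
    by (simp add: sum_distrib_left sum.swap[of _ "Pow H"])
  also have "\<dots> = (\<Sum>h\<in>U. hit_prob m p U b h)"
    by (rule sum.cong[OF refl], subst Cons.IH) (use Cons.prems fU in auto)
  also have "\<dots> = 1" using Cons.prems assms by (intro hit_mass) auto
  finally show ?case .
qed

lemma G_mass:
  assumes "m \<ge> 1" "0 \<le> p" "p \<le> 1" "H \<subseteq> {..<m}" "U \<subseteq> H" "card B < card U" "finite B"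
  shows "(\<Sum>Y\<in>Pow H. G m p U B Y) = 1"
proof -
  have "(\<Sum>Y\<in>Pow H. G m p U B Y) = (\<Sum>bs\<in>ball_orders B. \<Sum>Y\<in>Pow H. golf_dist m p U bs Y) / real (card (ball_orders B))"
    unfolding G_def by (simp add: sum_divide_distrib sum.swap[of _ "Pow H"])
  also have "\<dots> = (\<Sum>bs\<in>ball_orders B. 1) / real (card (ball_orders B))"
    by (rule arg_cong2[where f="(/)"], rule sum.cong[OF refl], rule golf_dist_mass)
       (use assms in \<open>auto simp: ball_orders_perm length_finite_permutations_of_set\<close>)
  also have "\<dots> = 1" using assms(7) by (simp add: ball_orders_perm)
  finally show ?thesis .
qed

lemma golf_step_lt: "m \<ge> 1 \<Longrightarrow> golf_step m y d < m"
  by (simp add: golf_step_def)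

lemma walk_pos_lt: "m \<ge> 1 \<Longrightarrow> w \<noteq> [] \<Longrightarrow> walk_pos m y w < m"
proof (induction w arbitrary: y)
  case (Cons d w) then show ?case by (cases w) (auto simp: golf_step_lt)
qed simp

lemma rot_step: "m \<ge> 1 \<Longrightarrow> golf_step m ((y + x) mod m) d = (golf_step m y d + x) mod m"
proof (cases d)
  case True
  assume m: "m \<ge> 1"
  have "((y + x) mod m + 1) mod m = (y + x + 1) mod m" by (rule mod_add_left_eq)
  moreover have "((y + 1) mod m + x) mod m = (y + 1 + x) mod m" by (rule mod_add_left_eq)
  ultimately show ?thesis using True by (simp add: golf_step_def add_ac)
next
  case False
  assume m: "m \<ge> 1"
  have "((y + x) mod m + (m - 1)) mod m = (y + x + (m - 1)) mod m" by (rule mod_add_left_eq)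
  moreover have "((y + (m - 1)) mod m + x) mod m = (y + (m - 1) + x) mod m" by (rule mod_add_left_eq)
  moreover have "(y + x) mod m + m - 1 = (y + x) mod m + (m - 1)" "y + m - 1 = y + (m - 1)" using m by auto
  ultimately show ?thesis using False by (simp add: golf_step_def add_ac)
qed

lemma rot_walk: "m \<ge> 1 \<Longrightarrow> walk_pos m ((y + x) mod m) w = (walk_pos m y w + x) mod m"
  by (induction w arbitrary: y) (auto simp: rot_step)

definition rot :: "nat \<Rightarrow> nat \<Rightarrow> nat \<Rightarrow> nat" where "rot m x y = (y + x) mod m"

lemma rot_inj: "inj_on (rot m x) {..<m}"
proof (rule inj_onI)
  fix a b assume a: "a \<in> {..<m}" and b: "b \<in> {..<m}" and e: "rot m x a = rot m x b"
  then have "int ((a + x) mod m) = int ((b + x) mod m)" by (simp add: rot_def)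
  then have "(int a + int x) mod int m = (int b + int x) mod int m" by (simp add: zmod_int)
  then have "int a mod int m = int b mod int m" by (metis add_diff_cancel_right' mod_diff_right_eq mod_diff_left_eq)
  then show "a = b" using a b by simp
qed

lemma rot_inj_sub: "A \<subseteq> {..<m} \<Longrightarrow> inj_on (rot m x) A"
  using rot_inj inj_on_subset by blast

lemma rot_lt: "m \<ge> 1 \<Longrightarrow> rot m x y < m" by (simp add: rot_def)

lemma hit_rot:
  assumes m: "m \<ge> 1" and U: "U \<subseteq> {..<m}" and h: "h < m"
  shows "hit_prob m p (rot m x ` U) (rot m x s) (rot m x h) = hit_prob m p U s h"
proof -
  have inU: "(rot m x y \<in> rot m x ` U) = (y \<in> U)" if "y < m" for y
    using inj_on_image_mem_iff[OF rot_inj _ U] that by auto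
  have eqv: "(rot m x y = rot m x h) = (y = h)" if "y < m" for y
    using rot_inj h that by (auto dest: inj_onD)
  have pos: "walk_pos m (rot m x s) w = rot m x (walk_pos m s w)" for w
    unfolding rot_def by (rule rot_walk[OF m])
  show ?thesis unfolding hit_prob_def
  proof (rule arg_cong[where f=suminf], rule ext, rule sum.cong[OF refl])
    fix k w assume w: "w \<in> {w::bool list. length w = Suc k}"
    have "w \<noteq> []" using w by auto
    then have lt: "walk_pos m s w < m" using walk_pos_lt[OF m] by blast
    have lt2: "walk_pos m s (take j w) < m" if "1 \<le> j" "j \<le> k" for j
    proof -
      have "take j w \<noteq> []" using w that by auto
      then show ?thesis using walk_pos_lt[OF m] by blast
    qed
    have "(walk_pos m (rot m x s) w = rot m x h \<and> rot m x h \<in> rot m x ` U \<and>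
          (\<forall>j. 1 \<le> j \<and> j \<le> k \<longrightarrow> walk_pos m (rot m x s) (take j w) \<notin> rot m x ` U))
        = (walk_pos m s w = h \<and> h \<in> U \<and> (\<forall>j. 1 \<le> j \<and> j \<le> k \<longrightarrow> walk_pos m s (take j w) \<notin> U))"
      unfolding pos using eqv[OF lt] inU[OF h] inU lt2 by auto
    then show "(if walk_pos m (rot m x s) w = rot m x h \<and> rot m x h \<in> rot m x ` U \<and>
          (\<forall>j. 1 \<le> j \<and> j \<le> k \<longrightarrow> walk_pos m (rot m x s) (take j w) \<notin> rot m x ` U) then walk_weight p w else 0)
        = (if walk_pos m s w = h \<and> h \<in> U \<and> (\<forall>j. 1 \<le> j \<and> j \<le> k \<longrightarrow> walk_pos m s (take j w) \<notin> U) then walk_weight p w else 0)"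
      by simp
  qed
qed

lemma G_rot:
  assumes m: "m \<ge> 1"
  shows "finite B \<Longrightarrow> B \<subseteq> {..<m} \<Longrightarrow> U \<subseteq> {..<m} \<Longrightarrow> Y \<subseteq> {..<m} \<Longrightarrow>
    G m p (rot m x ` U) (rot m x ` B) (rot m x ` Y) = G m p U B Y"
proof (induction "card B" arbitrary: B U rule: less_induct)
  case less
  show ?case
  proof (cases "B = {}")
    case True
    have "(rot m x ` Y = rot m x ` U) = (Y = U)"
      by (rule inj_on_image_eq_iff[OF rot_inj]) (use less.prems in auto)
    then show ?thesis using True by (simp add: G_empty)
  next
    case False
    let ?r = "rot m x"
    have injB: "inj_on ?r B" and injU: "inj_on ?r U" using less.prems rot_inj_sub by auto
    have "G m p (?r ` U) (?r ` B) (?r ` Y) =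
      (\<Sum>b'\<in>?r ` B. \<Sum>h'\<in>?r ` U. hit_prob m p (?r ` U) b' h' * G m p (?r ` U - {h'}) (?r ` B - {b'}) (?r ` Y)) / real (card (?r ` B))"
      using False less.prems by (intro G_rec) auto
    also have "\<dots> = (\<Sum>b\<in>B. \<Sum>h\<in>U. hit_prob m p (?r ` U) (?r b) (?r h) * G m p (?r ` (U - {h})) (?r ` (B - {b})) (?r ` Y)) / real (card B)"
    proof -
      have "?r ` U - {?r h} = ?r ` (U - {h})" if "h \<in> U" for h
        using inj_on_image_set_diff[OF injU, of U "{h}"] that by auto
      moreover have "?r ` B - {?r b} = ?r ` (B - {b})" if "b \<in> B" for b
        using inj_on_image_set_diff[OF injB, of B "{b}"] that by auto
      ultimately show ?thesis
        by (simp add: sum.reindex[OF injB] sum.reindex[OF injU] card_image[OF injB])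
    qed
    also have "\<dots> = (\<Sum>b\<in>B. \<Sum>h\<in>U. hit_prob m p U b h * G m p (U - {h}) (B - {b}) Y) / real (card B)"
    proof -
      have "hit_prob m p (?r ` U) (?r b) (?r h) * G m p (?r ` (U - {h})) (?r ` (B - {b})) (?r ` Y)
           = hit_prob m p U b h * G m p (U - {h}) (B - {b}) Y" if "b \<in> B" "h \<in> U" for b h
      proof -
        have "card (B - {b}) < card B" using that less.prems by (meson card_Diff1_less)
        then have "G m p (?r ` (U - {h})) (?r ` (B - {b})) (?r ` Y) = G m p (U - {h}) (B - {b}) Y"
          using less.prems by (intro less.hyps) auto
        moreover have "hit_prob m p (?r ` U) (?r b) (?r h) = hit_prob m p U b h"
          using that less.prems by (intro hit_rot m) auto
        ultimately show ?thesis by simp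
      qed
      then show ?thesis by simp
    qed
    also have "\<dots> = G m p U B Y" using False less.prems by (intro G_rec[symmetric]) auto
    finally show ?thesis .
  qed
qed

lemma golfP_G:
  "golfP m Nb Nh p E = (\<Sum>(B, H)\<in>golf_configs m Nb Nh. \<Sum>Y\<in>Pow H. if E B H Y then G m p H B Y else 0)
     / real (card (golf_configs m Nb Nh))"
  unfolding golfP_def G_def
proof (rule arg_cong2[where f="(/)"], rule sum.cong[OF refl], clarify)
  fix B H
  show "(\<Sum>bs\<in>ball_orders B. \<Sum>Y\<in>Pow H. if E B H Y then golf_dist m p H bs Y else 0) / real (card (ball_orders B)) =
    (\<Sum>Y\<in>Pow H. if E B H Y then (\<Sum>bs\<in>ball_orders B. golf_dist m p H bs Y) / real (card (ball_orders B)) else 0)"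
    unfolding sum_divide_distrib
    by (subst sum.swap) (rule sum.cong[OF refl], auto simp: sum_divide_distrib)
qed simp

lemma cfg_finite: "finite (golf_configs m Nb Nh)"
proof -
  have "golf_configs m Nb Nh \<subseteq> Pow {..<m} \<times> Pow {..<m}" by (auto simp: golf_configs_def)
  then show ?thesis by (rule finite_subset) auto
qed

definition Rc :: "nat \<Rightarrow> nat \<Rightarrow> nat set \<times> nat set \<Rightarrow> nat set \<times> nat set" where
  "Rc m x c = (rot m x ` fst c, rot m x ` snd c)"

lemma cfg_rot: "m \<ge> 1 \<Longrightarrow> c \<in> golf_configs m Nb Nh \<Longrightarrow> Rc m x c \<in> golf_configs m Nb Nh"
proof -
  assume m: "m \<ge> 1" and c: "c \<in> golf_configs m Nb Nh"
  obtain B H where cBH: "c = (B, H)" by fastforce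
  with c have B: "B \<subseteq> {..<m}" and H: "H \<subseteq> {..<m}" and BH: "B \<inter> H = {}" and cB: "card B = Nb" and cH: "card H = Nh"
    by (auto simp: golf_configs_def)
  have "rot m x ` B \<inter> rot m x ` H = rot m x ` (B \<inter> H)"
    using inj_on_image_Int[OF rot_inj B H] by simp
  then show ?thesis using cBH B H BH cB cH m
    by (auto simp: golf_configs_def Rc_def rot_lt card_image[OF rot_inj_sub])
qed

lemma cfg_rot_image: assumes m: "m \<ge> 1" shows "Rc m x ` golf_configs m Nb Nh = golf_configs m Nb Nh"
proof (rule endo_inj_surj[OF cfg_finite])
  show "Rc m x ` golf_configs m Nb Nh \<subseteq> golf_configs m Nb Nh" using cfg_rot[OF m] by auto
  show "inj_on (Rc m x) (golf_configs m Nb Nh)"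
  proof (rule inj_onI)
    fix c c' assume c: "c \<in> golf_configs m Nb Nh" and c': "c' \<in> golf_configs m Nb Nh" and e: "Rc m x c = Rc m x c'"
    have s: "fst c \<subseteq> {..<m}" "snd c \<subseteq> {..<m}" "fst c' \<subseteq> {..<m}" "snd c' \<subseteq> {..<m}"
      using c c' by (auto simp: golf_configs_def)
    have "fst c = fst c'" using e inj_on_image_eq_iff[OF rot_inj s(1) s(3)] by (simp add: Rc_def)
    moreover have "snd c = snd c'" using e inj_on_image_eq_iff[OF rot_inj s(2) s(4)] by (simp add: Rc_def)
    ultimately show "c = c'" by (simp add: prod_eq_iff)
  qed
qed

lemma sum_cfg_rot:
  assumes m: "m \<ge> 1"
  shows "(\<Sum>c\<in>golf_configs m Nb Nh. f c) = (\<Sum>c\<in>golf_configs m Nb Nh. f (Rc m x c))"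
proof -
  have inj: "inj_on (Rc m x) (golf_configs m Nb Nh)"
    using eq_card_imp_inj_on[OF cfg_finite] cfg_rot_image[OF m] by metis
  have "(\<Sum>c\<in>golf_configs m Nb Nh. f c) = (\<Sum>c\<in>Rc m x ` golf_configs m Nb Nh. f c)"
    using cfg_rot_image[OF m] by simp
  also have "\<dots> = (\<Sum>c\<in>golf_configs m Nb Nh. f (Rc m x c))" by (rule sum.reindex[OF inj, unfolded comp_def])
  finally show ?thesis .
qed

lemma one_point_mass:
  assumes m: "m \<ge> 1" and p: "0 \<le> p" "p \<le> 1" and c: "(B, H) \<in> golf_configs m b (Suc b)"
  shows "(\<Sum>x<m. G m p H B {x}) = 1"
proof -
  have B: "B \<subseteq> {..<m}" and H: "H \<subseteq> {..<m}" and cB: "card B = b" and cH: "card H = Suc b"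
    using c by (auto simp: golf_configs_def)
  have fB: "finite B" and fH: "finite H" using B H finite_subset by auto
  have "1 = (\<Sum>Y\<in>Pow H. G m p H B Y)"
    using G_mass[OF m p H order.refl _ fB] cB cH by simp
  also have "\<dots> = (\<Sum>Y\<in>(\<lambda>x. {x}) ` H. G m p H B Y)"
  proof (rule sum.mono_neutral_right)
    show "\<forall>Y\<in>Pow H - (\<lambda>x. {x}) ` H. G m p H B Y = 0"
    proof
      fix Y assume Y: "Y \<in> Pow H - (\<lambda>x. {x}) ` H"
      show "G m p H B Y = 0"
      proof (rule ccontr)
        assume "G m p H B Y \<noteq> 0"
        then have "card Y = 1" using G_supp[OF fH] cB cH by fastforce
        then obtain x where "Y = {x}" by (auto simp: card_Suc_eq)
        then show False using Y by auto
      qed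
    qed
  qed (use fH in auto)
  also have "\<dots> = (\<Sum>x\<in>H. G m p H B {x})" by (subst sum.reindex) (auto simp: inj_on_def)
  also have "\<dots> = (\<Sum>x<m. G m p H B {x})"
    by (rule sum.mono_neutral_left) (use H fH G_zero[OF fH] in auto)
  finally show ?thesis by simp
qed

theorem small_cycle:
  assumes m: "m \<ge> 2 * b + 1" and p: "0 \<le> p" "p \<le> 1"
  shows "golfCP m b (b + 1) p (\<lambda>B H Y. Y = {0}) (\<lambda>B H Y. 0 \<in> H) = 1 / real (b + 1)"
proof -
  have m1: "m \<ge> 1" using m by simp
  let ?C = "golf_configs m b (b + 1)"
  define N where "N = real (card ?C)"
  define g where "g x = (\<Sum>c\<in>?C. G m p (snd c) (fst c) {x})" for x
  define cc where "cc x = (\<Sum>c\<in>?C. if x \<in> snd c then 1 else 0 :: real)" for x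
  have cex: "({..<b}, {b..<2*b+1}) \<in> ?C" using m by (auto simp: golf_configs_def)
  have Npos: "N > 0" unfolding N_def using cex cfg_finite card_gt_0_iff by fastforce
  have gx: "g x = g 0" if "x < m" for x
  proof -
    have "g x = (\<Sum>c\<in>?C. G m p (snd (Rc m x c)) (fst (Rc m x c)) {x})"
      unfolding g_def by (rule sum_cfg_rot[OF m1])
    also have "\<dots> = g 0" unfolding g_def
    proof (rule sum.cong[OF refl])
      fix c assume c: "c \<in> ?C"
      have e: "rot m x ` {0} = {x}" using that by (simp add: rot_def)
      have "G m p (rot m x ` snd c) (rot m x ` fst c) (rot m x ` {0}) = G m p (snd c) (fst c) {0}"
        using c m1 by (intro G_rot) (auto intro: finite_subset[of _ "{..<m}"] simp: golf_configs_def)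
      then show "G m p (snd (Rc m x c)) (fst (Rc m x c)) {x} = G m p (snd c) (fst c) {0}"
        unfolding Rc_def e by simp
    qed
    finally show ?thesis .
  qed
  have ccx: "cc x = cc 0" if "x < m" for x
  proof -
    have "cc x = (\<Sum>c\<in>?C. if x \<in> snd (Rc m x c) then 1 else 0 :: real)"
      unfolding cc_def by (rule sum_cfg_rot[OF m1])
    also have "\<dots> = cc 0" unfolding cc_def
    proof (rule sum.cong[OF refl])
      fix c assume c: "c \<in> ?C"
      have "x = rot m x 0" using that by (simp add: rot_def)
      moreover have "(rot m x 0 \<in> rot m x ` snd c) = (0 \<in> snd c)"
      proof -
        have "snd c \<subseteq> {..<m}" using c by (auto simp: golf_configs_def)
        moreover have "(0::nat) \<in> {..<m}" using m1 by simp
        ultimately show ?thesis using inj_on_image_mem_iff[OF rot_inj] by blast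
      qed
      ultimately show "(if x \<in> snd (Rc m x c) then 1 else 0 :: real) = (if 0 \<in> snd c then 1 else 0)"
        unfolding Rc_def by simp
    qed
    finally show ?thesis .
  qed
  have sg: "(\<Sum>x<m. g x) = N"
  proof -
    have "(\<Sum>x<m. g x) = (\<Sum>c\<in>?C. \<Sum>x<m. G m p (snd c) (fst c) {x})" unfolding g_def by (rule sum.swap)
    also have "\<dots> = (\<Sum>c\<in>?C. 1)" by (rule sum.cong[OF refl]) (use one_point_mass[OF m1 p] in force)
    finally show ?thesis by (simp add: N_def)
  qed
  have scc: "(\<Sum>x<m. cc x) = real (b + 1) * N"
  proof -
    have "(\<Sum>x<m. cc x) = (\<Sum>c\<in>?C. \<Sum>x<m. if x \<in> snd c then 1 else 0 :: real)" unfolding cc_def by (rule sum.swap)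
    also have "\<dots> = (\<Sum>c\<in>?C. real (b + 1))"
    proof (rule sum.cong[OF refl])
      fix c assume c: "c \<in> ?C"
      then have "snd c \<subseteq> {..<m}" "card (snd c) = Suc b" by (auto simp: golf_configs_def)
      then show "(\<Sum>x<m. if x \<in> snd c then 1 else 0 :: real) = real (b + 1)"
      proof -
        have "(\<Sum>x<m. if x \<in> snd c then 1 else 0 :: real) = real (card ({..<m} \<inter> snd c))"
          by (simp add: sum.If_cases)
        also have "{..<m} \<inter> snd c = snd c" using \<open>snd c \<subseteq> {..<m}\<close> by blast
        finally show ?thesis using \<open>card (snd c) = Suc b\<close> by simp
      qed
    qed
    finally show ?thesis by (simp add: N_def)
  qed
  have "(\<Sum>x<m. g x) = (\<Sum>x<m. g 0)" by (rule sum.cong[OF refl]) (use gx in blast)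
  then have "real m * g 0 = N" using sg by simp
  then have g0: "g 0 = N / real m" using m1 by (simp add: eq_divide_eq mult.commute)
  have "(\<Sum>x<m. cc x) = (\<Sum>x<m. cc 0)" by (rule sum.cong[OF refl]) (use ccx in blast)
  then have "real m * cc 0 = real (b + 1) * N" using scc by simp
  then have cc0: "cc 0 = real (b + 1) * N / real m" using m1 by (simp add: eq_divide_eq mult.commute)
  have P1: "golfP m b (b + 1) p (\<lambda>B H Y. Y = {0} \<and> 0 \<in> H) = g 0 / N"
    unfolding golfP_G g_def N_def
  proof (rule arg_cong2[where f="(/)"], rule sum.cong[OF refl], clarify)
    fix B H assume c: "(B, H) \<in> ?C"
    then have fH: "finite H" using finite_subset[of H "{..<m}"] by (auto simp: golf_configs_def)
    show "(\<Sum>Y\<in>Pow H. if Y = {0} \<and> 0 \<in> H then G m p H B Y else 0) = G m p (snd (B, H)) (fst (B, H)) {0}"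
    proof (cases "0 \<in> H")
      case True
      have "finite (Pow H)" using fH by simp
      then show ?thesis using True by (simp add: sum.delta)
    next
      case False
      then show ?thesis using G_zero[OF fH, of "{0}"] by simp
    qed
  qed simp
  have P2: "golfP m b (b + 1) p (\<lambda>B H Y. 0 \<in> H) = cc 0 / N"
    unfolding golfP_G cc_def N_def
  proof (rule arg_cong2[where f="(/)"], rule sum.cong[OF refl], clarify)
    fix B H assume c: "(B, H) \<in> ?C"
    then have "finite B" "H \<subseteq> {..<m}" "card B = b" "card H = Suc b"
      using finite_subset[of B "{..<m}"] by (auto simp: golf_configs_def)
    then show "(\<Sum>Y\<in>Pow H. if 0 \<in> H then G m p H B Y else 0) = (if 0 \<in> snd (B, H) then 1 else 0)"
      using G_mass[OF m1 p, of H H B] by auto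
  qed simp
  have mpos: "real m > 0" using m1 by simp
  have "golfCP m b (b + 1) p (\<lambda>B H Y. Y = {0}) (\<lambda>B H Y. 0 \<in> H) = (g 0 / N) / (cc 0 / N)"
    unfolding golfCP_def P1[symmetric] P2[symmetric] by simp
  also have "\<dots> = g 0 / cc 0" using Npos by simp
  also have "\<dots> = (N / real m) / (real (b + 1) * N / real m)" unfolding g0 cc0 ..
  also have "\<dots> = 1 / real (b + 1)"
  proof -
    have "real (b + 1) * N > 0" using Npos by simp
    then show ?thesis using Npos mpos by (simp add: field_simps)
  qed
  finally show ?thesis .
qed

lemma golfCP_formula:
  assumes m: "m \<ge> 1" and p: "0 \<le> p" "p \<le> 1" and NbNh: "Nb < Nh"
    and CY: "\<And>B H. Cond B H \<Longrightarrow> Y0 \<subseteq> H"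
  shows "golfCP m Nb Nh p (\<lambda>B H Y. Y = Y0) (\<lambda>B H Y. Cond B H)
    = (\<Sum>c\<in>{c \<in> golf_configs m Nb Nh. Cond (fst c) (snd c)}. G m p (snd c) (fst c) Y0)
      / real (card {c \<in> golf_configs m Nb Nh. Cond (fst c) (snd c)})"
proof -
  let ?C = "golf_configs m Nb Nh"
  let ?S = "{c \<in> ?C. Cond (fst c) (snd c)}"
  define N where "N = real (card ?C)"
  have P1: "golfP m Nb Nh p (\<lambda>B H Y. Y = Y0 \<and> Cond B H) = (\<Sum>c\<in>?S. G m p (snd c) (fst c) Y0) / N"
  proof -
    have "golfP m Nb Nh p (\<lambda>B H Y. Y = Y0 \<and> Cond B H) =
       (\<Sum>c\<in>?C. if Cond (fst c) (snd c) then G m p (snd c) (fst c) Y0 else 0) / N"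
      unfolding golfP_G N_def
    proof (rule arg_cong2[where f="(/)"], rule sum.cong[OF refl], clarify)
      fix B H assume c: "(B, H) \<in> ?C"
      then have fH: "finite H" using finite_subset[of H "{..<m}"] by (auto simp: golf_configs_def)
      show "(\<Sum>Y\<in>Pow H. if Y = Y0 \<and> Cond B H then G m p H B Y else 0) =
          (if Cond (fst (B, H)) (snd (B, H)) then G m p (snd (B, H)) (fst (B, H)) Y0 else 0)"
      proof (cases "Cond B H")
        case True
        have "finite (Pow H)" "Y0 \<in> Pow H" using fH CY[OF True] by auto
        then show ?thesis using True by (simp add: sum.delta)
      qed simp
    qed simp
    also have "\<dots> = (\<Sum>c\<in>?S. G m p (snd c) (fst c) Y0) / N"
      by (simp add: sum.inter_filter[OF cfg_finite])
    finally show ?thesis .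
  qed
  have P2: "golfP m Nb Nh p (\<lambda>B H Y. Cond B H) = real (card ?S) / N"
  proof -
    have "golfP m Nb Nh p (\<lambda>B H Y. Cond B H) =
       (\<Sum>c\<in>?C. if Cond (fst c) (snd c) then 1 else 0) / N"
      unfolding golfP_G N_def
    proof (rule arg_cong2[where f="(/)"], rule sum.cong[OF refl], clarify)
      fix B H assume c: "(B, H) \<in> ?C"
      then have "finite B" "H \<subseteq> {..<m}" "card B = Nb" "card H = Nh"
        using finite_subset[of B "{..<m}"] by (auto simp: golf_configs_def)
      then show "(\<Sum>Y\<in>Pow H. if Cond B H then G m p H B Y else 0) = (if Cond (fst (B, H)) (snd (B, H)) then 1 else 0)"
        using G_mass[OF m p, of H H B] NbNh by auto
    qed simp
    also have "\<dots> = real (card ?S) / N"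
      by (simp add: sum.inter_filter[OF cfg_finite, symmetric])
    finally show ?thesis .
  qed
  show ?thesis
  proof (cases "N = 0")
    case True
    then have "?C = {}" using cfg_finite unfolding N_def by simp
    then show ?thesis unfolding golfCP_def P1 P2 by simp
  next
    case False
    then show ?thesis unfolding golfCP_def P1 P2 by simp
  qed
qed

definition pos :: "nat \<Rightarrow> int \<Rightarrow> nat" where "pos n z = nat (z mod int n)"

lemma pos_lt: "n \<ge> 1 \<Longrightarrow> pos n z < n"
  unfolding pos_def by (simp add: nat_less_iff)

lemma int_pos: "n \<ge> 1 \<Longrightarrow> int (pos n z) = z mod int n"
  unfolding pos_def by simp

lemma golf_step_pos:
  assumes n: "n \<ge> 1"
  shows "golf_step n (pos n z) d = pos n (z + (if d then 1 else -1))"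
proof -
  have "int (golf_step n (pos n z) d) = int (pos n (z + (if d then 1 else -1)))"
  proof (cases d)
    case True
    have "int (golf_step n (pos n z) d) = (z mod int n + 1) mod int n"
      using True n by (simp add: golf_step_def zmod_int int_pos add.commute)
    also have "\<dots> = (z + 1) mod int n" by (rule mod_add_left_eq)
    finally show ?thesis using True n by (simp add: int_pos)
  next
    case False
    have "pos n z + n - 1 = pos n z + (n - 1)" using n by simp
    then have "int (golf_step n (pos n z) d) = (z mod int n + (int n - 1)) mod int n"
      using False n by (simp add: golf_step_def zmod_int int_pos of_nat_diff add_diff_eq)
    also have "\<dots> = (z + (int n - 1)) mod int n" by (rule mod_add_left_eq)
    also have "\<dots> = (z - 1) mod int n"
      by (metis add.commute add_diff_eq mod_add_self2)
    finally show ?thesis using False n by (simp add: int_pos)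
  qed
  then show ?thesis by simp
qed

lemma pos_inj:
  assumes n: "n \<ge> 1" and "a0 \<le> z" "z < a0 + int n" "a0 \<le> z'" "z' < a0 + int n" "pos n z = pos n z'"
  shows "z = z'"
proof -
  have "z mod int n = z' mod int n" using assms(6) int_pos[OF n] by metis
  then have "int n dvd (z - z')" by (simp add: mod_eq_dvd_iff)
  then obtain q where q: "z - z' = int n * q" by (auto simp: dvd_def)
  have "\<bar>z - z'\<bar> < int n" using assms by auto
  have "q = 0"
  proof (rule ccontr)
    assume "q \<noteq> 0"
    then have "q \<ge> 1 \<or> q \<le> -1" by linarith
    then have "int n * q \<ge> int n \<or> int n * q \<le> - int n"
    proof
      assume "q \<ge> 1" then show ?thesis using mult_left_mono[of 1 q "int n"] by simp
    next
      assume "q \<le> -1" then show ?thesis using mult_left_mono[of q "-1" "int n"] by simp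
    qed
    then show False using q \<open>\<bar>z - z'\<bar> < int n\<close> by linarith
  qed
  then show ?thesis using q by simp
qed

lemma small_step:
  assumes "1 \<le> t" "t \<le> L"
  shows "golf_step (L + 1) t d = (if d then (if t = L then 0 else t + 1) else t - 1)"
proof (cases d)
  case True then show ?thesis using assms by (simp add: golf_step_def)
next
  case False
  have "t + (L + 1) - 1 = (t - 1) + (L + 1)" using assms by simp
  then have "(t + (L + 1) - 1) mod (L + 1) = t - 1" using assms by (simp only: mod_add_self2) simp
  then show ?thesis using False by (simp add: golf_step_def)
qed

locale geom =
  fixes n k :: nat and a :: "nat \<Rightarrow> int"
  assumes n1: "n \<ge> 1" and k1: "k \<ge> 1" and amono: "\<And>i. i < k \<Longrightarrow> a i < a (Suc i)"
    and aend: "a k = a 0 + int n"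
begin

definition Xs where "Xs = (\<lambda>i. pos n (a i)) ` {..<k}"
definition ell where "ell i = nat (a (Suc i) - a i - 1)"
definition psi where "psi i t = pos n (a i + int t)"
definition blk where "blk i = psi i ` {1..ell i}"

lemma a_mono: "i < j \<Longrightarrow> j \<le> k \<Longrightarrow> a i < a j"
proof (induction j)
  case 0 then show ?case by simp
next
  case (Suc j)
  then show ?case using amono[of j] by (cases "i = j") auto
qed

lemma a_le: "i \<le> j \<Longrightarrow> j \<le> k \<Longrightarrow> a i \<le> a j"
  using a_mono by (cases "i = j") (auto simp: order.strict_implies_order)

lemma ell_eq: "i < k \<Longrightarrow> int (ell i) = a (Suc i) - a i - 1"
  unfolding ell_def using amono[of i] by simp

lemma locate:
  assumes "a 0 \<le> z" "z < a k"
  shows "\<exists>i<k. a i \<le> z \<and> z < a (Suc i)"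
proof -
  define S where "S = {i. i < k \<and> a i \<le> z}"
  have "0 \<in> S" using assms k1 S_def by simp
  have fS: "finite S" unfolding S_def by simp
  define i where "i = Max S"
  have iS: "i \<in> S" using fS \<open>0 \<in> S\<close> i_def Max_in by blast
  have "z < a (Suc i)"
  proof (cases "Suc i < k")
    case True
    show ?thesis
    proof (rule ccontr)
      assume "\<not> z < a (Suc i)"
      then have "Suc i \<in> S" using True S_def by simp
      then show False using Max_ge[OF fS, of "Suc i"] i_def by simp
    qed
  next
    case False
    then have "Suc i = k" using iS S_def by simp
    then show ?thesis using assms by simp
  qed
  then show ?thesis using iS S_def by blast
qed

lemma locate_unique:
  assumes "i < k" "j < k" "a i \<le> z" "z < a (Suc i)" "a j \<le> z" "z < a (Suc j)"
  shows "i = j"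
proof (rule ccontr)
  assume "i \<noteq> j"
  then have "i < j \<or> j < i" by auto
  then show False
  proof
    assume "i < j" then have "a (Suc i) \<le> a j" using a_le assms by simp
    then show False using assms by simp
  next
    assume "j < i" then have "a (Suc j) \<le> a i" using a_le assms by simp
    then show False using assms by simp
  qed
qed

lemma coord_range:
  assumes "i < k" "t \<le> ell i"
  shows "a i \<le> a i + int t" "a i + int t < a (Suc i)" "a 0 \<le> a i + int t" "a i + int t < a 0 + int n"
proof -
  show "a i \<le> a i + int t" by simp
  show "a i + int t < a (Suc i)" using assms ell_eq[OF assms(1)] by simp
  then show "a i + int t < a 0 + int n" using a_le[of "Suc i" k] assms aend by simp
  show "a 0 \<le> a i + int t" using a_le[of 0 i] assms by simp
qed

lemma psi_inj:
  assumes "i < k" "j < k" "t \<le> ell i" "t' \<le> ell j" "psi i t = psi j t'"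
  shows "i = j \<and> t = t'"
proof -
  have e: "a i + int t = a j + int t'"
    using pos_inj[OF n1 coord_range(3,4)[OF assms(1,3)] coord_range(3,4)[OF assms(2,4)]] assms(5)
    unfolding psi_def by blast
  have "i = j" using locate_unique[OF assms(1,2) coord_range(1,2)[OF assms(1,3)]] coord_range(1,2)[OF assms(2,4)] e
    by simp
  then show ?thesis using e by simp
qed

lemma psi_lt: "psi i t < n" unfolding psi_def using pos_lt[OF n1] .

lemma psi0: "psi i 0 = pos n (a i)" unfolding psi_def by simp

lemma Xs_psi: "Xs = (\<lambda>i. psi i 0) ` {..<k}" unfolding Xs_def psi0 ..

lemma psi_notX:
  assumes "i < k" "1 \<le> t" "t \<le> ell i"
  shows "psi i t \<notin> Xs"
proof
  assume "psi i t \<in> Xs"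
  then obtain j where "j < k" "psi i t = psi j 0" unfolding Xs_psi by auto
  then show False using psi_inj[OF assms(1) \<open>j < k\<close> assms(3), of 0] assms by simp
qed

lemma psi_end:
  assumes "i < k"
  shows "psi i (ell i + 1) \<in> Xs"
proof -
  have e: "a i + int (ell i + 1) = a (Suc i)" using ell_eq[OF assms] by simp
  show ?thesis
  proof (cases "Suc i < k")
    case True
    then show ?thesis unfolding Xs_psi psi_def e by auto
  next
    case False
    then have "Suc i = k" using assms by simp
    then have "pos n (a (Suc i)) = pos n (a 0)" using aend unfolding pos_def by simp
    then show ?thesis unfolding Xs_psi psi_def e using k1 by (auto intro!: image_eqI[of _ _ 0])
  qed
qed

lemma psi_start: "i < k \<Longrightarrow> psi i 0 \<in> Xs" unfolding Xs_psi by auto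

lemma cover:
  assumes "v < n"
  shows "\<exists>i<k. \<exists>t\<le>ell i. v = psi i t"
proof -
  define z where "z = a 0 + (int v - a 0) mod int n"
  have z1: "a 0 \<le> z" "z < a k" using n1 aend unfolding z_def by auto
  have "z mod int n = int v mod int n" unfolding z_def by (metis add.commute diff_add_cancel mod_add_right_eq)
  then have pz: "pos n z = v" using assms unfolding pos_def by simp
  obtain i where i: "i < k" "a i \<le> z" "z < a (Suc i)" using locate[OF z1] by blast
  define t where "t = nat (z - a i)"
  have "int t = z - a i" using i t_def by simp
  then have "t \<le> ell i" using ell_eq[OF i(1)] i by simp
  moreover have "psi i t = v" unfolding psi_def using \<open>int t = z - a i\<close> pz by simp
  ultimately show ?thesis using i by blast
qed

lemma psi_step:
  assumes "i < k" "1 \<le> t" "t \<le> ell i"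
  shows "golf_step n (psi i t) d = psi i (if d then t + 1 else t - 1)"
proof -
  have "golf_step n (psi i t) d = pos n (a i + int t + (if d then 1 else -1))"
    unfolding psi_def by (rule golf_step_pos[OF n1])
  also have "a i + int t + (if d then 1 else -1) = a i + int (if d then t + 1 else t - 1)"
    using assms by (auto simp: of_nat_diff)
  finally show ?thesis unfolding psi_def .
qed

end

context geom
begin

definition Ui where "Ui U i = insert 0 {t\<in>{1..ell i}. psi i t \<in> U}"
definition Bi where "Bi B i = {t\<in>{1..ell i}. psi i t \<in> B}"

lemma step_couple:
  assumes i: "i < k" and XU: "Xs \<subseteq> U" and t: "1 \<le> t" "t \<le> ell i"
  shows "(golf_step n (psi i t) d \<in> U) = (golf_step (ell i + 1) t d \<in> Ui U i)"
    and "golf_step (ell i + 1) t d \<noteq> 0 \<Longrightarrow> 1 \<le> golf_step (ell i + 1) t d \<and> golf_step (ell i + 1) t d \<le> ell i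
           \<and> golf_step n (psi i t) d = psi i (golf_step (ell i + 1) t d)"
    and "golf_step (ell i + 1) t d = 0 \<Longrightarrow> golf_step n (psi i t) d \<in> Xs"
proof -
  define t2 where "t2 = (if d then t + 1 else t - 1)"
  have bg: "golf_step n (psi i t) d = psi i t2" unfolding t2_def by (rule psi_step[OF i t])
  have sm: "golf_step (ell i + 1) t d = (if t2 = ell i + 1 then 0 else t2)"
    unfolding t2_def using small_step[OF t] t by auto
  have cases: "t2 = 0 \<or> t2 = ell i + 1 \<or> (1 \<le> t2 \<and> t2 \<le> ell i)" unfolding t2_def using t by auto
  have endX: "t2 = 0 \<or> t2 = ell i + 1 \<Longrightarrow> psi i t2 \<in> Xs" using psi_start[OF i] psi_end[OF i] by auto
  have sm0: "golf_step (ell i + 1) t d = 0 \<longleftrightarrow> (t2 = 0 \<or> t2 = ell i + 1)" using sm by auto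
  show "(golf_step n (psi i t) d \<in> U) = (golf_step (ell i + 1) t d \<in> Ui U i)"
    using cases endX XU unfolding bg sm Ui_def by auto
  show "golf_step (ell i + 1) t d \<noteq> 0 \<Longrightarrow> 1 \<le> golf_step (ell i + 1) t d \<and> golf_step (ell i + 1) t d \<le> ell i
           \<and> golf_step n (psi i t) d = psi i (golf_step (ell i + 1) t d)"
    using cases unfolding bg sm by auto
  show "golf_step (ell i + 1) t d = 0 \<Longrightarrow> golf_step n (psi i t) d \<in> Xs"
    using endX sm0 bg by simp
qed

lemma couple_L1:
  assumes i: "i < k" and XU: "Xs \<subseteq> U" and t0: "1 \<le> t0" "t0 \<le> ell i"
  shows "surv (ell i + 1) (Ui U i) t0 (length w) w \<Longrightarrow>
    walk_pos n (psi i t0) w = psi i (walk_pos (ell i + 1) t0 w) \<and>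
    1 \<le> walk_pos (ell i + 1) t0 w \<and> walk_pos (ell i + 1) t0 w \<le> ell i"
proof (induction w rule: rev_induct)
  case Nil then show ?case using t0 by simp
next
  case (snoc d w)
  have sw: "surv (ell i + 1) (Ui U i) t0 (length w) w"
    using snoc.prems surv_Suc[of "w @ [d]" "length w"] surv_append[of w "length w"] by simp
  have nz: "walk_pos (ell i + 1) t0 (w @ [d]) \<notin> Ui U i"
    using snoc.prems surv_Suc[of "w @ [d]" "length w"] by simp
  from snoc.IH[OF sw] have ih: "walk_pos n (psi i t0) w = psi i (walk_pos (ell i + 1) t0 w)"
    "1 \<le> walk_pos (ell i + 1) t0 w" "walk_pos (ell i + 1) t0 w \<le> ell i" by auto
  have "golf_step (ell i + 1) (walk_pos (ell i + 1) t0 w) d \<noteq> 0"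
    using nz by (auto simp: walk_pos_snoc Ui_def)
  from step_couple(2)[OF i XU ih(2,3) this] show ?case
    by (simp add: walk_pos_snoc ih(1))
qed

lemma couple_surv:
  assumes i: "i < k" and XU: "Xs \<subseteq> U" and t0: "1 \<le> t0" "t0 \<le> ell i"
  shows "surv n U (psi i t0) (length w) w = surv (ell i + 1) (Ui U i) t0 (length w) w"
proof (induction w rule: rev_induct)
  case Nil then show ?case by (simp add: surv_def)
next
  case (snoc d w)
  have b: "surv n U (psi i t0) (length (w @ [d])) (w @ [d]) =
      (surv n U (psi i t0) (length w) w \<and> walk_pos n (psi i t0) (w @ [d]) \<notin> U)"
    using surv_Suc[of "w @ [d]" "length w"] surv_append[of w "length w"] by simp
  have s: "surv (ell i + 1) (Ui U i) t0 (length (w @ [d])) (w @ [d]) =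
      (surv (ell i + 1) (Ui U i) t0 (length w) w \<and> walk_pos (ell i + 1) t0 (w @ [d]) \<notin> Ui U i)"
    using surv_Suc[of "w @ [d]" "length w"] surv_append[of w "length w"] by simp
  show ?case
  proof (cases "surv (ell i + 1) (Ui U i) t0 (length w) w")
    case True
    from couple_L1[OF i XU t0 True] have ih: "walk_pos n (psi i t0) w = psi i (walk_pos (ell i + 1) t0 w)"
      "1 \<le> walk_pos (ell i + 1) t0 w" "walk_pos (ell i + 1) t0 w \<le> ell i" by auto
    show ?thesis unfolding b s snoc.IH using step_couple(1)[OF i XU ih(2,3), of d] True
      by (simp add: walk_pos_snoc ih(1))
  next
    case False
    then show ?thesis unfolding b s snoc.IH by simp
  qed
qed

lemma hit_split:
  assumes "length w = Suc j"
  shows "w = take j w @ [last w]" "length (take j w) = j"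
    "(\<forall>jj. 1 \<le> jj \<and> jj \<le> j \<longrightarrow> walk_pos m s (take jj w) \<notin> U) = surv m U s j (take j w)"
proof -
  have "w \<noteq> []" using assms by auto
  then show "w = take j w @ [last w]" using assms
    by (metis append_butlast_last_id butlast_conv_take diff_Suc_1)
  show "length (take j w) = j" using assms by simp
  show "(\<forall>jj. 1 \<le> jj \<and> jj \<le> j \<longrightarrow> walk_pos m s (take jj w) \<notin> U) = surv m U s j (take j w)"
    unfolding surv_def by auto
qed

lemma hit_couple:
  assumes i: "i < k" and XU: "Xs \<subseteq> U" and t0: "1 \<le> t0" "t0 \<le> ell i" and th: "1 \<le> th" "th \<le> ell i"
  shows "hit_prob n p U (psi i t0) (psi i th) = hit_prob (ell i + 1) p (Ui U i) t0 th"
  unfolding hit_prob_def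
proof (rule arg_cong[where f=suminf], rule ext, rule sum.cong[OF refl])
  fix j w assume "w \<in> {w::bool list. length w = Suc j}"
  then have lw: "length w = Suc j" by simp
  define v where "v = take j w"
  define d where "d = last w"
  have wv: "w = v @ [d]" and lv: "length v = j" using hit_split[OF lw] unfolding v_def d_def by auto
  have thU: "(psi i th \<in> U) = (th \<in> Ui U i)" using th unfolding Ui_def by auto
  have thX: "psi i th \<notin> Xs" using psi_notX[OF i th] .
  have cond: "(walk_pos n (psi i t0) w = psi i th \<and> psi i th \<in> U \<and> surv n U (psi i t0) j v) =
     (walk_pos (ell i + 1) t0 w = th \<and> th \<in> Ui U i \<and> surv (ell i + 1) (Ui U i) t0 j v)"
  proof (cases "surv (ell i + 1) (Ui U i) t0 j v")
    case True
    from couple_L1[OF i XU t0, of v] True lv have ih: "walk_pos n (psi i t0) v = psi i (walk_pos (ell i + 1) t0 v)"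
      "1 \<le> walk_pos (ell i + 1) t0 v" "walk_pos (ell i + 1) t0 v \<le> ell i" by auto
    have sv: "surv n U (psi i t0) j v" using True couple_surv[OF i XU t0, of v] lv by simp
    have "(walk_pos n (psi i t0) w = psi i th) = (walk_pos (ell i + 1) t0 w = th)"
    proof (cases "golf_step (ell i + 1) (walk_pos (ell i + 1) t0 v) d = 0")
      case True
      have "golf_step n (psi i (walk_pos (ell i + 1) t0 v)) d \<in> Xs" using step_couple(3)[OF i XU ih(2,3) True] .
      then show ?thesis using True thX th unfolding wv walk_pos_snoc ih(1) by auto
    next
      case False
      from step_couple(2)[OF i XU ih(2,3) False] have
        st: "1 \<le> golf_step (ell i + 1) (walk_pos (ell i + 1) t0 v) d" "golf_step (ell i + 1) (walk_pos (ell i + 1) t0 v) d \<le> ell i"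
        "golf_step n (psi i (walk_pos (ell i + 1) t0 v)) d = psi i (golf_step (ell i + 1) (walk_pos (ell i + 1) t0 v) d)"
        by auto
      show ?thesis unfolding wv walk_pos_snoc ih(1) st(3) using psi_inj[OF i i _ _, of _ th] st th by auto
    qed
    then show ?thesis using True sv thU by simp
  next
    case False
    then have "\<not> surv n U (psi i t0) j v" using couple_surv[OF i XU t0, of v] lv by simp
    then show ?thesis using False by simp
  qed
  show "(if walk_pos n (psi i t0) w = psi i th \<and> psi i th \<in> U \<and> (\<forall>jj. 1 \<le> jj \<and> jj \<le> j \<longrightarrow> walk_pos n (psi i t0) (take jj w) \<notin> U)
          then walk_weight p w else 0) =
        (if walk_pos (ell i + 1) t0 w = th \<and> th \<in> Ui U i \<and> (\<forall>jj. 1 \<le> jj \<and> jj \<le> j \<longrightarrow> walk_pos (ell i + 1) t0 (take jj w) \<notin> Ui U i)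
          then walk_weight p w else 0)"
    unfolding hit_split(3)[OF lw] v_def[symmetric] using cond by simp
qed

lemma hit_zero:
  assumes i: "i < k" and XU: "Xs \<subseteq> U" and t0: "1 \<le> t0" "t0 \<le> ell i" and hX: "h \<notin> Xs"
    and hb: "\<forall>t. 1 \<le> t \<and> t \<le> ell i \<longrightarrow> h \<noteq> psi i t"
  shows "hit_prob n p U (psi i t0) h = 0"
proof -
  have "(\<Sum>w\<in>{w::bool list. length w = Suc j}.
        (if walk_pos n (psi i t0) w = h \<and> h \<in> U \<and> (\<forall>jj. 1 \<le> jj \<and> jj \<le> j \<longrightarrow> walk_pos n (psi i t0) (take jj w) \<notin> U)
         then walk_weight p w else 0)) = 0" for j
  proof (rule sum.neutral, rule ballI)
    fix w assume "w \<in> {w::bool list. length w = Suc j}"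
    then have lw: "length w = Suc j" by simp
    define v where "v = take j w"
    define d where "d = last w"
    have wv: "w = v @ [d]" and lv: "length v = j" using hit_split[OF lw] unfolding v_def d_def by auto
    have "walk_pos n (psi i t0) w \<noteq> h" if sv: "surv n U (psi i t0) j v"
    proof -
      have "surv (ell i + 1) (Ui U i) t0 j v" using sv couple_surv[OF i XU t0, of v] lv by simp
      from couple_L1[OF i XU t0, of v] this lv have ih: "walk_pos n (psi i t0) v = psi i (walk_pos (ell i + 1) t0 v)"
        "1 \<le> walk_pos (ell i + 1) t0 v" "walk_pos (ell i + 1) t0 v \<le> ell i" by auto
      show ?thesis
      proof (cases "golf_step (ell i + 1) (walk_pos (ell i + 1) t0 v) d = 0")
        case True
        show ?thesis using step_couple(3)[OF i XU ih(2,3) True] hX unfolding wv walk_pos_snoc ih(1) by auto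
      next
        case False
        show ?thesis using step_couple(2)[OF i XU ih(2,3) False] hb unfolding wv walk_pos_snoc ih(1) by auto
      qed
    qed
    then show "(if walk_pos n (psi i t0) w = h \<and> h \<in> U \<and> (\<forall>jj. 1 \<le> jj \<and> jj \<le> j \<longrightarrow> walk_pos n (psi i t0) (take jj w) \<notin> U)
         then walk_weight p w else 0) = 0"
      unfolding hit_split(3)[OF lw] v_def[symmetric] by auto
  qed
  then show ?thesis unfolding hit_prob_def by simp
qed

end

lemma prod_indicator:
  "(\<Prod>i<(K::nat). if P i then 1 else 0 :: real) = (if \<forall>i<K. P i then 1 else 0)"
  by (induction K) (auto simp: less_Suc_eq)

context geom
begin

lemma psi_inj_on: "i < k \<Longrightarrow> inj_on (psi i) {1..ell i}"
  by (rule inj_onI) (use psi_inj in auto)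

lemma Ui_sub: "Ui U i - {0} \<subseteq> {1..ell i}" unfolding Ui_def by auto
lemma Bi_sub: "Bi B i \<subseteq> {1..ell i}" unfolding Bi_def by auto
lemma Ui_fin: "finite (Ui U i)" unfolding Ui_def by auto
lemma Bi_fin: "finite (Bi B i)" unfolding Bi_def by auto

lemma Ui_remove:
  assumes "i < k" "j < k" "1 \<le> t'" "t' \<le> ell j"
  shows "Ui (U - {psi j t'}) i = (if i = j then Ui U j - {t'} else Ui U i)"
  using psi_inj[OF assms(1,2) _ assms(4)] assms unfolding Ui_def by auto

lemma Bi_remove:
  assumes "i < k" "j < k" "1 \<le> t'" "t' \<le> ell j"
  shows "Bi (B - {psi j t'}) i = (if i = j then Bi B j - {t'} else Bi B i)"
  using psi_inj[OF assms(1,2) _ assms(4)] assms unfolding Bi_def by auto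

lemma B_decomp: assumes "B \<subseteq> (\<Union>i<k. blk i)" shows "B = (\<Union>j<k. psi j ` Bi B j)"
proof
  show "B \<subseteq> (\<Union>j<k. psi j ` Bi B j)"
  proof
    fix x assume x: "x \<in> B"
    then obtain i t where "i < k" "t \<in> {1..ell i}" "x = psi i t" using assms unfolding blk_def by blast
    then show "x \<in> (\<Union>j<k. psi j ` Bi B j)" using x unfolding Bi_def by blast
  qed
  show "(\<Union>j<k. psi j ` Bi B j) \<subseteq> B" unfolding Bi_def by auto
qed

lemma B_disj: "j < k \<Longrightarrow> j' < k \<Longrightarrow> j \<noteq> j' \<Longrightarrow> psi j ` Bi B j \<inter> psi j' ` Bi B j' = {}"
  unfolding Bi_def using psi_inj by fastforce

lemma card_B: "B \<subseteq> (\<Union>i<k. blk i) \<Longrightarrow> card B = (\<Sum>j<k. card (Bi B j))"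
proof -
  assume B: "B \<subseteq> (\<Union>i<k. blk i)"
  have "card B = card (\<Union>j<k. psi j ` Bi B j)" using B_decomp[OF B] by simp
  also have "\<dots> = (\<Sum>j<k. card (psi j ` Bi B j))"
    by (rule card_UN_disjoint) (simp_all add: Bi_fin B_disj)
  also have "\<dots> = (\<Sum>j<k. card (Bi B j))"
    by (rule sum.cong[OF refl], rule card_image, rule inj_on_subset[OF psi_inj_on Bi_sub]) simp
  finally show ?thesis .
qed

lemma sum_B: "B \<subseteq> (\<Union>i<k. blk i) \<Longrightarrow> (\<Sum>b\<in>B. f b) = (\<Sum>j<k. \<Sum>t\<in>Bi B j. f (psi j t))"
proof -
  assume B: "B \<subseteq> (\<Union>i<k. blk i)"
  have "(\<Sum>b\<in>B. f b) = (\<Sum>b\<in>(\<Union>j<k. psi j ` Bi B j). f b)" using B_decomp[OF B] by simp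
  also have "\<dots> = (\<Sum>j<k. \<Sum>b\<in>psi j ` Bi B j. f b)"
    by (rule sum.UNION_disjoint) (simp_all add: Bi_fin B_disj)
  also have "\<dots> = (\<Sum>j<k. \<Sum>t\<in>Bi B j. f (psi j t))"
    by (rule sum.cong[OF refl], rule sum.reindex[unfolded comp_def], rule inj_on_subset[OF psi_inj_on Bi_sub]) simp
  finally show ?thesis .
qed

lemma U_eq_X:
  assumes "Xs \<subseteq> U" "U \<subseteq> {..<n}"
  shows "(U = Xs) = (\<forall>i<k. Ui U i = {0})"
proof
  assume "U = Xs"
  then show "\<forall>i<k. Ui U i = {0}" unfolding Ui_def using psi_notX by auto
next
  assume A: "\<forall>i<k. Ui U i = {0}"
  show "U = Xs"
  proof (rule antisym[OF _ assms(1)], rule subsetI)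
    fix v assume v: "v \<in> U"
    then have "v < n" using assms by auto
    then obtain i t where it: "i < k" "t \<le> ell i" "v = psi i t" using cover by blast
    show "v \<in> Xs"
    proof (cases "t = 0")
      case True then show ?thesis using it psi_start by simp
    next
      case False
      then have "t \<in> Ui U i" using it v unfolding Ui_def by auto
      then show ?thesis using A it False by auto
    qed
  qed
qed

abbreviation Gi where "Gi p i U' B' \<equiv> G (ell i + 1) p U' B' {0}"

lemma inner_sum:
  assumes j: "j < k" and P: "Bi B j \<noteq> {} \<or> True"
  shows "(\<Sum>tb\<in>Bi B j. \<Sum>t'\<in>Ui U j - {0}. hit_prob (ell j + 1) p (Ui U j) tb t' * Gi p j (Ui U j - {t'}) (Bi B j - {tb}))
     = real (card (Bi B j)) * Gi p j (Ui U j) (Bi B j)"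
proof (cases "Bi B j = {}")
  case True then show ?thesis by simp
next
  case False
  have z: "Gi p j (Ui U j - {0}) B' = 0" for B' by (rule G_zero) (auto simp: Ui_fin)
  have "Gi p j (Ui U j) (Bi B j) = (\<Sum>tb\<in>Bi B j. \<Sum>t'\<in>Ui U j. hit_prob (ell j + 1) p (Ui U j) tb t' * Gi p j (Ui U j - {t'}) (Bi B j - {tb})) / real (card (Bi B j))"
    by (rule G_rec[OF Bi_fin False])
  also have "(\<lambda>tb. \<Sum>t'\<in>Ui U j. hit_prob (ell j + 1) p (Ui U j) tb t' * Gi p j (Ui U j - {t'}) (Bi B j - {tb}))
      = (\<lambda>tb. \<Sum>t'\<in>Ui U j - {0}. hit_prob (ell j + 1) p (Ui U j) tb t' * Gi p j (Ui U j - {t'}) (Bi B j - {tb}))"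
  proof -
    have "0 \<in> Ui U j" by (simp add: Ui_def)
    then show ?thesis by (intro ext, subst sum.remove[OF Ui_fin \<open>0 \<in> Ui U j\<close>]) (simp add: z[simplified])
  qed
  finally show ?thesis using False Bi_fin[of B j] by (simp add: card_gt_0_iff)
qed

lemma main_ind:
  shows "finite B \<Longrightarrow> Xs \<subseteq> U \<Longrightarrow> U \<subseteq> {..<n} \<Longrightarrow> B \<subseteq> (\<Union>i<k. blk i) \<Longrightarrow>
    G n p U B Xs = (\<Prod>i<k. Gi p i (Ui U i) (Bi B i))"
proof (induction "card B" arbitrary: B U rule: less_induct)
  case less
  have fU: "finite U" using less.prems(3) finite_subset by blast
  show ?case
  proof (cases "B = {}")
    case True
    have "Bi B i = {}" for i using True unfolding Bi_def by simp
    then have "(\<Prod>i<k. Gi p i (Ui U i) (Bi B i)) = (\<Prod>i<k. if Ui U i = {0} then 1 else 0)"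
      by (simp add: G_empty eq_commute)
    also have "\<dots> = (if U = Xs then 1 else 0)"
      by (simp add: prod_indicator U_eq_X[OF less.prems(2,3)])
    finally show ?thesis using True by (simp add: G_empty eq_commute)
  next
    case False
    define P where "P = (\<Prod>i<k. Gi p i (Ui U i) (Bi B i))"
    define Q where "Q j = (\<Prod>i\<in>{..<k} - {j}. Gi p i (Ui U i) (Bi B i))" for j
    have PQ: "P = Gi p j (Ui U j) (Bi B j) * Q j" if "j < k" for j
      unfolding P_def Q_def using that by (subst prod.remove[of _ j]) auto
    have inner: "(\<Sum>h\<in>U. hit_prob n p U (psi j tb) h * G n p (U - {h}) (B - {psi j tb}) Xs)
        = (\<Sum>t'\<in>Ui U j - {0}. hit_prob (ell j + 1) p (Ui U j) tb t' * Gi p j (Ui U j - {t'}) (Bi B j - {tb})) * Q j"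
      if j: "j < k" and tb: "tb \<in> Bi B j" for j tb
    proof -
      have tb1: "1 \<le> tb" "tb \<le> ell j" using tb unfolding Bi_def by auto
      have bB: "psi j tb \<in> B" using tb unfolding Bi_def by auto
      define f where "f h = hit_prob n p U (psi j tb) h * G n p (U - {h}) (B - {psi j tb}) Xs" for h
      define S where "S = psi j ` (Ui U j - {0})"
      have SU: "S \<subseteq> U" unfolding S_def Ui_def by auto
      have "(\<Sum>h\<in>U. f h) = (\<Sum>h\<in>S. f h)"
      proof (rule sum.mono_neutral_right[OF fU SU], rule ballI)
        fix h assume h: "h \<in> U - S"
        show "f h = 0"
        proof (cases "h \<in> Xs")
          case True
          have "G n p (U - {h}) (B - {psi j tb}) Xs = 0" using True fU by (intro G_zero) auto
          then show ?thesis unfolding f_def by simp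
        next
          case False
          have "\<forall>t. 1 \<le> t \<and> t \<le> ell j \<longrightarrow> h \<noteq> psi j t"
            using h unfolding S_def Ui_def by auto
          then have "hit_prob n p U (psi j tb) h = 0" using hit_zero[OF j less.prems(2) tb1 False] by blast
          then show ?thesis unfolding f_def by simp
        qed
      qed
      also have "\<dots> = (\<Sum>t'\<in>Ui U j - {0}. f (psi j t'))"
        unfolding S_def by (rule sum.reindex[unfolded comp_def], rule inj_on_subset[OF psi_inj_on[OF j] Ui_sub])
      also have "\<dots> = (\<Sum>t'\<in>Ui U j - {0}. hit_prob (ell j + 1) p (Ui U j) tb t' * Gi p j (Ui U j - {t'}) (Bi B j - {tb}) * Q j)"
      proof (rule sum.cong[OF refl])
        fix t' assume t': "t' \<in> Ui U j - {0}"
        then have t'1: "1 \<le> t'" "t' \<le> ell j" and t'U: "psi j t' \<in> U" unfolding Ui_def by auto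
        have hc: "hit_prob n p U (psi j tb) (psi j t') = hit_prob (ell j + 1) p (Ui U j) tb t'"
          by (rule hit_couple[OF j less.prems(2) tb1 t'1])
        have "card (B - {psi j tb}) < card B" using bB less.prems(1) by (meson card_Diff1_less)
        moreover have "Xs \<subseteq> U - {psi j t'}" using less.prems(2) psi_notX[OF j t'1] by auto
        ultimately have ih: "G n p (U - {psi j t'}) (B - {psi j tb}) Xs =
            (\<Prod>i<k. Gi p i (Ui (U - {psi j t'}) i) (Bi (B - {psi j tb}) i))"
          using less.prems by (intro less.hyps) auto
        also have "\<dots> = (\<Prod>i<k. if i = j then Gi p j (Ui U j - {t'}) (Bi B j - {tb}) else Gi p i (Ui U i) (Bi B i))"
          by (rule prod.cong[OF refl]) (simp add: Ui_remove[OF _ j t'1] Bi_remove[OF _ j tb1])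
        also have "\<dots> = Gi p j (Ui U j - {t'}) (Bi B j - {tb}) * Q j"
          unfolding Q_def using j by (subst prod.remove[of _ j]) (auto intro!: prod.cong)
        finally show "f (psi j t') = hit_prob (ell j + 1) p (Ui U j) tb t' * Gi p j (Ui U j - {t'}) (Bi B j - {tb}) * Q j"
          unfolding f_def hc by simp
      qed
      finally show ?thesis unfolding f_def by (simp add: sum_distrib_right)
    qed
    have "G n p U B Xs = (\<Sum>b\<in>B. \<Sum>h\<in>U. hit_prob n p U b h * G n p (U - {h}) (B - {b}) Xs) / real (card B)"
      using G_rec[OF less.prems(1) False] .
    also have "(\<Sum>b\<in>B. \<Sum>h\<in>U. hit_prob n p U b h * G n p (U - {h}) (B - {b}) Xs)
        = (\<Sum>j<k. \<Sum>tb\<in>Bi B j. \<Sum>h\<in>U. hit_prob n p U (psi j tb) h * G n p (U - {h}) (B - {psi j tb}) Xs)"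
      by (rule sum_B[OF less.prems(4)])
    also have "\<dots> = (\<Sum>j<k. real (card (Bi B j)) * P)"
    proof (rule sum.cong[OF refl])
      fix j assume "j \<in> {..<k}"
      then have j: "j < k" by simp
      have "(\<Sum>tb\<in>Bi B j. \<Sum>h\<in>U. hit_prob n p U (psi j tb) h * G n p (U - {h}) (B - {psi j tb}) Xs)
          = (\<Sum>tb\<in>Bi B j. (\<Sum>t'\<in>Ui U j - {0}. hit_prob (ell j + 1) p (Ui U j) tb t' * Gi p j (Ui U j - {t'}) (Bi B j - {tb})) * Q j)"
        by (rule sum.cong[OF refl]) (rule inner[OF j])
      also have "\<dots> = (\<Sum>tb\<in>Bi B j. \<Sum>t'\<in>Ui U j - {0}. hit_prob (ell j + 1) p (Ui U j) tb t' * Gi p j (Ui U j - {t'}) (Bi B j - {tb})) * Q j"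
        by (rule sum_distrib_right[symmetric])
      also have "\<dots> = real (card (Bi B j)) * Gi p j (Ui U j) (Bi B j) * Q j"
        by (subst inner_sum[OF j]) simp_all
      also have "\<dots> = real (card (Bi B j)) * P" using PQ[OF j] by simp
      finally show "(\<Sum>tb\<in>Bi B j. \<Sum>h\<in>U. hit_prob n p U (psi j tb) h * G n p (U - {h}) (B - {psi j tb}) Xs)
          = real (card (Bi B j)) * P" .
    qed
    also have "\<dots> = real (card B) * P"
      unfolding card_B[OF less.prems(4)] by (simp add: sum_distrib_right)
    finally show ?thesis using False less.prems(1) unfolding P_def by (simp add: card_gt_0_iff)
  qed
qed

end

context geom
begin

lemma Ui_Bi: "Ui S i = insert 0 (Bi S i)" unfolding Ui_def Bi_def by auto

lemma blk_int: "i < k \<Longrightarrow> S \<inter> blk i = psi i ` Bi S i" unfolding blk_def Bi_def by auto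

lemma card_blk: "i < k \<Longrightarrow> card (S \<inter> blk i) = card (Bi S i)"
  unfolding blk_int by (rule card_image, rule inj_on_subset[OF psi_inj_on Bi_sub])

lemma card_Xs: "card Xs = k"
proof -
  have "inj_on (\<lambda>i. psi i 0) {..<k}" by (rule inj_onI) (use psi_inj in auto)
  then show ?thesis unfolding Xs_psi by (simp add: card_image)
qed

lemma Xs_lt: "Xs \<subseteq> {..<n}" unfolding Xs_psi using psi_lt by auto

lemma sub_blk: "S \<subseteq> {..<n} \<Longrightarrow> S \<inter> Xs = {} \<Longrightarrow> S \<subseteq> (\<Union>i<k. blk i)"
proof
  fix v assume S: "S \<subseteq> {..<n}" "S \<inter> Xs = {}" and v: "v \<in> S"
  then obtain i t where it: "i < k" "t \<le> ell i" "v = psi i t" using cover by blast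
  have "t \<noteq> 0" using it v S psi_start by auto
  then have "t \<in> {1..ell i}" using it by auto
  then show "v \<in> (\<Union>i<k. blk i)" using it unfolding blk_def by blast
qed

lemma Bi_union:
  assumes A: "\<And>j. j < k \<Longrightarrow> A j \<subseteq> {1..ell j}" and i: "i < k"
  shows "Bi (\<Union>j<k. psi j ` A j) i = A i"
proof
  show "Bi (\<Union>j<k. psi j ` A j) i \<subseteq> A i"
  proof
    fix t assume "t \<in> Bi (\<Union>j<k. psi j ` A j) i"
    then obtain j t' where "t \<in> {1..ell i}" "j < k" "t' \<in> A j" "psi i t = psi j t'" unfolding Bi_def by auto
    moreover have "t' \<le> ell j" using A[OF \<open>j < k\<close>] \<open>t' \<in> A j\<close> by auto
    ultimately show "t \<in> A i" using psi_inj[OF i \<open>j < k\<close>, of t t'] by auto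
  qed
  show "A i \<subseteq> Bi (\<Union>j<k. psi j ` A j) i" using A[OF i] i unfolding Bi_def by auto
qed

lemma Bi_Xs: "i < k \<Longrightarrow> Bi (Xs \<union> R) i = Bi R i"
  unfolding Bi_def using psi_notX by auto

lemma union_blk: "(\<And>j. j < k \<Longrightarrow> A j \<subseteq> {1..ell j}) \<Longrightarrow> (\<Union>j<k. psi j ` A j) \<subseteq> (\<Union>i<k. blk i)"
  unfolding blk_def by blast

lemma union_notX: "(\<And>j. j < k \<Longrightarrow> A j \<subseteq> {1..ell j}) \<Longrightarrow> (\<Union>j<k. psi j ` A j) \<inter> Xs = {}"
  using psi_notX by fastforce

definition Cond where
  "Cond b B H = (Xs \<subseteq> H \<and> (\<forall>i<k. card (B \<inter> blk i) = b i \<and> card (H \<inter> blk i) = b i))"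

definition SC where "SC b i = {c \<in> golf_configs (ell i + 1) (b i) (b i + 1). 0 \<in> snd c}"

definition CC where "CC Nb Nh b = {c \<in> golf_configs n Nb Nh. Cond b (fst c) (snd c)}"

definition Phi where "Phi c = (\<lambda>i\<in>{..<k}. (Bi (fst c) i, Ui (snd c) i))"

definition Psi where "Psi f = ((\<Union>i<k. psi i ` fst (f i)), Xs \<union> (\<Union>i<k. psi i ` (snd (f i) - {0})))"

lemma SC_props:
  assumes "c \<in> SC b i"
  shows "fst c \<subseteq> {1..ell i}" "snd c - {0} \<subseteq> {1..ell i}" "0 \<in> snd c" "fst c \<inter> snd c = {}"
    "card (fst c) = b i" "card (snd c - {0}) = b i"
proof -
  obtain B H where c: "c = (B, H)" by fastforce
  from assms have B: "B \<subseteq> {..<ell i + 1}" "H \<subseteq> {..<ell i + 1}" "B \<inter> H = {}" "card B = b i" "card H = b i + 1" "0 \<in> H"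
    unfolding SC_def golf_configs_def c by auto
  show "fst c \<subseteq> {1..ell i}"
  proof
    fix x assume "x \<in> fst c"
    then have "x \<in> B" using c by simp
    then have "x \<noteq> 0" "x < ell i + 1" using B by auto
    then show "x \<in> {1..ell i}" by auto
  qed
  show "snd c - {0} \<subseteq> {1..ell i}" using B c by auto
  show "0 \<in> snd c" "fst c \<inter> snd c = {}" "card (fst c) = b i" using B c by auto
  have "finite H" using finite_subset[OF B(2)] by simp
  then show "card (snd c - {0}) = b i" using B c by simp
qed

lemma Phi_in:
  assumes c: "c \<in> CC Nb Nh b"
  shows "Phi c \<in> (\<Pi>\<^sub>E i\<in>{..<k}. SC b i)"
proof -
  obtain B H where cBH: "c = (B, H)" by fastforce
  from c have B: "B \<subseteq> {..<n}" "H \<subseteq> {..<n}" "B \<inter> H = {}" and Cd: "Cond b B H"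
    unfolding CC_def golf_configs_def cBH by auto
  show ?thesis unfolding Phi_def
  proof (rule restrict_PiE_iff[THEN iffD2], intro ballI)
    fix i assume "i \<in> {..<k}"
    then have i: "i < k" by simp
    have cb: "card (Bi B i) = b i" "card (Bi H i) = b i" using Cd card_blk[OF i] unfolding Cond_def using i by auto
    have "0 \<notin> Bi H i" unfolding Bi_def by auto
    then have "card (Ui H i) = b i + 1" using cb Bi_fin unfolding Ui_Bi by simp
    moreover have "Bi B i \<inter> Ui H i = {}" using B(3) unfolding Ui_def Bi_def by auto
    moreover have "Bi B i \<subseteq> {..<ell i + 1}" "Ui H i \<subseteq> {..<ell i + 1}" unfolding Ui_def Bi_def by auto
    ultimately show "(Bi (fst c) i, Ui (snd c) i) \<in> SC b i"
      unfolding SC_def golf_configs_def cBH using cb by (simp add: Ui_def)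
  qed
qed

lemma CC_blk: "c \<in> CC Nb Nh b \<Longrightarrow> fst c \<subseteq> (\<Union>i<k. blk i)"
proof (rule sub_blk)
  assume "c \<in> CC Nb Nh b"
  then have "fst c \<subseteq> {..<n}" "fst c \<inter> snd c = {}" "Xs \<subseteq> snd c"
    by (auto simp: CC_def golf_configs_def Cond_def)
  then show "fst c \<subseteq> {..<n}" "fst c \<inter> Xs = {}" by blast+
qed

lemma Psi_Phi:
  assumes c: "c \<in> CC Nb Nh b"
  shows "Psi (Phi c) = c"
proof -
  obtain B H where cBH: "c = (B, H)" by fastforce
  from c have B: "B \<subseteq> {..<n}" "H \<subseteq> {..<n}" "B \<inter> H = {}" and XH: "Xs \<subseteq> H"
    unfolding CC_def golf_configs_def cBH Cond_def by auto
  have Bb: "B \<subseteq> (\<Union>i<k. blk i)" using CC_blk[OF c] cBH by simp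
  have e1: "(\<Union>i<k. psi i ` fst (Phi c i)) = B"
    using B_decomp[OF Bb] unfolding Phi_def cBH by simp
  have HX: "H - Xs \<subseteq> (\<Union>i<k. blk i)" using B(2) by (intro sub_blk) auto
  have "Bi (H - Xs) i = Bi H i" if "i < k" for i unfolding Bi_def using psi_notX that by auto
  then have "(\<Union>i<k. psi i ` (snd (Phi c i) - {0})) = H - Xs"
    using B_decomp[OF HX] unfolding Phi_def cBH Ui_Bi by (auto simp: Bi_def)
  then have e2: "Xs \<union> (\<Union>i<k. psi i ` (snd (Phi c i) - {0})) = H" using XH by auto
  have "Psi (Phi c) = (B, H)" unfolding Psi_def using e1 e2 by simp
  then show ?thesis using cBH by simp
qed

lemma Phi_Psi:
  assumes f: "f \<in> (\<Pi>\<^sub>E i\<in>{..<k}. SC b i)"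
  shows "Phi (Psi f) = f"
proof -
  have fj: "f j \<in> SC b j" if "j < k" for j using PiE_mem[OF f, of j] that by simp
  have A1: "\<And>j. j < k \<Longrightarrow> fst (f j) \<subseteq> {1..ell j}" and A2: "\<And>j. j < k \<Longrightarrow> snd (f j) - {0} \<subseteq> {1..ell j}"
    using SC_props(1,2)[OF fj] by auto
  show ?thesis
  proof (rule ext)
    fix i show "Phi (Psi f) i = f i"
    proof (cases "i < k")
      case True
      have "Bi (fst (Psi f)) i = fst (f i)" unfolding Psi_def using Bi_union[OF A1 True] by simp
      moreover have "Ui (snd (Psi f)) i = snd (f i)"
        unfolding Psi_def Ui_Bi using Bi_Xs[OF True] Bi_union[OF A2 True] SC_props(3)[OF fj[OF True]] by auto
      ultimately show ?thesis unfolding Phi_def using True by (simp add: prod_eq_iff)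
    next
      case False then show ?thesis using f unfolding Phi_def by (auto simp: PiE_def extensional_def)
    qed
  qed
qed

lemma Psi_in:
  assumes f: "f \<in> (\<Pi>\<^sub>E i\<in>{..<k}. SC b i)" and sb: "(\<Sum>i<k. b i) = Nb" and Nh: "Nh = k + Nb"
  shows "Psi f \<in> CC Nb Nh b"
proof -
  have fj: "f j \<in> SC b j" if "j < k" for j using PiE_mem[OF f, of j] that by simp
  have A1: "\<And>j. j < k \<Longrightarrow> fst (f j) \<subseteq> {1..ell j}" and A2: "\<And>j. j < k \<Longrightarrow> snd (f j) - {0} \<subseteq> {1..ell j}"
    using SC_props(1,2)[OF fj] by auto
  define B where "B = (\<Union>i<k. psi i ` fst (f i))"
  define R where "R = (\<Union>i<k. psi i ` (snd (f i) - {0}))"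
  have PsiBR: "Psi f = (B, Xs \<union> R)" unfolding Psi_def B_def R_def ..
  have Bb: "B \<subseteq> (\<Union>i<k. blk i)" unfolding B_def by (rule union_blk[OF A1])
  have Rb: "R \<subseteq> (\<Union>i<k. blk i)" unfolding R_def by (rule union_blk[OF A2])
  have blkn: "(\<Union>i<k. blk i) \<subseteq> {..<n}" unfolding blk_def using psi_lt by auto
  have RX: "R \<inter> Xs = {}" unfolding R_def by (rule union_notX[OF A2])
  have BX: "B \<inter> Xs = {}" unfolding B_def by (rule union_notX[OF A1])
  have BiB: "Bi B i = fst (f i)" if "i < k" for i unfolding B_def using Bi_union[OF A1 that] .
  have BiR: "Bi R i = snd (f i) - {0}" if "i < k" for i unfolding R_def using Bi_union[OF A2 that] .
  have BR: "B \<inter> R = {}"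
  proof (rule ccontr)
    assume "B \<inter> R \<noteq> {}"
    then obtain v where v: "v \<in> B" "v \<in> R" by blast
    then obtain i t where it: "i < k" "t \<in> fst (f i)" "v = psi i t" unfolding B_def by auto
    have "t \<in> {1..ell i}" using A1[OF it(1)] it(2) by auto
    then have "t \<in> Bi R i" using v it unfolding Bi_def by auto
    then have "t \<in> snd (f i)" using BiR[OF it(1)] by auto
    then show False using it SC_props(4)[OF fj[OF it(1)]] by auto
  qed
  have cB: "card B = Nb"
  proof -
    have "card B = (\<Sum>j<k. card (Bi B j))" using card_B[OF Bb] .
    also have "\<dots> = (\<Sum>j<k. b j)" using BiB SC_props(5)[OF fj] by (intro sum.cong) auto
    finally show ?thesis using sb by simp
  qed
  have cR: "card R = Nb"
  proof -
    have "card R = (\<Sum>j<k. card (Bi R j))" using card_B[OF Rb] .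
    also have "\<dots> = (\<Sum>j<k. b j)" using BiR SC_props(6)[OF fj] by (intro sum.cong) auto
    finally show ?thesis using sb by simp
  qed
  have fX: "finite Xs" using finite_subset[OF Xs_lt] by simp
  have fR: "finite R" using finite_subset[OF subset_trans[OF Rb blkn]] by simp
  have cH: "card (Xs \<union> R) = Nh"
  proof -
    have "card (Xs \<union> R) = card Xs + card R" using card_Un_disjoint[OF fX fR] RX by (simp add: Int_commute)
    then show ?thesis using card_Xs cR Nh by simp
  qed
  have cbB: "card (B \<inter> blk i) = b i" if "i < k" for i
    using card_blk[OF that] BiB[OF that] SC_props(5)[OF fj[OF that]] by simp
  have cbH: "card ((Xs \<union> R) \<inter> blk i) = b i" if "i < k" for i
    using card_blk[OF that] Bi_Xs[OF that] BiR[OF that] SC_props(6)[OF fj[OF that]] by simp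
  have disj: "B \<inter> (Xs \<union> R) = {}" using BR BX by auto
  have s1: "B \<subseteq> {..<n}" using Bb blkn by blast
  have s2: "Xs \<union> R \<subseteq> {..<n}" using Rb blkn Xs_lt by blast
  have "(B, Xs \<union> R) \<in> golf_configs n Nb Nh" unfolding golf_configs_def using s1 s2 disj cB cH by simp
  moreover have "Cond b B (Xs \<union> R)" unfolding Cond_def using cbB cbH by blast
  ultimately show ?thesis unfolding CC_def PsiBR by simp
qed

lemma SC_finite: "finite (SC b i)"
  unfolding SC_def using cfg_finite by simp

theorem geom_main:
  assumes p: "0 \<le> p" "p \<le> 1" and sb: "(\<Sum>i<k. b i) = Nb" and Nh: "Nh = k + Nb"
  shows "golfCP n Nb Nh p (\<lambda>B H Y. Y = Xs) (\<lambda>B H Y. Cond b B H)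
     = (\<Prod>i<k. golfCP (ell i + 1) (b i) (b i + 1) p (\<lambda>B H Y. Y = {0}) (\<lambda>B H Y. 0 \<in> H))"
proof -
  let ?T = "\<Pi>\<^sub>E i\<in>{..<k}. SC b i"
  define F where "F i c = G (ell i + 1) p (snd c) (fst c) {0}" for i c
  have NbNh: "Nb < Nh" using Nh k1 by simp
  have L: "golfCP n Nb Nh p (\<lambda>B H Y. Y = Xs) (\<lambda>B H Y. Cond b B H)
      = (\<Sum>c\<in>CC Nb Nh b. G n p (snd c) (fst c) Xs) / real (card (CC Nb Nh b))"
    unfolding CC_def by (rule golfCP_formula[OF n1 p NbNh]) (simp add: Cond_def)
  have R: "golfCP (ell i + 1) (b i) (b i + 1) p (\<lambda>B H Y. Y = {0}) (\<lambda>B H Y. 0 \<in> H)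
      = (\<Sum>c\<in>SC b i. F i c) / real (card (SC b i))" for i
    unfolding SC_def F_def by (rule golfCP_formula) (use p in auto)
  have S1: "(\<Sum>c\<in>CC Nb Nh b. G n p (snd c) (fst c) Xs) = (\<Sum>f\<in>?T. \<Prod>i<k. F i (f i))"
  proof (rule sum.reindex_bij_witness[where i=Psi and j=Phi])
    show "\<And>c. c \<in> CC Nb Nh b \<Longrightarrow> Psi (Phi c) = c" by (rule Psi_Phi)
    show "\<And>c. c \<in> CC Nb Nh b \<Longrightarrow> Phi c \<in> ?T" by (rule Phi_in)
    show "\<And>f. f \<in> ?T \<Longrightarrow> Phi (Psi f) = f" by (rule Phi_Psi)
    show "\<And>f. f \<in> ?T \<Longrightarrow> Psi f \<in> CC Nb Nh b" by (rule Psi_in[OF _ sb Nh])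
    fix c assume c: "c \<in> CC Nb Nh b"
    obtain B H where cBH: "c = (B, H)" by fastforce
    from c have B: "B \<subseteq> {..<n}" "H \<subseteq> {..<n}" "Xs \<subseteq> H"
      unfolding CC_def golf_configs_def cBH Cond_def by auto
    have fB: "finite B" using finite_subset[OF B(1)] by simp
    have Bb: "B \<subseteq> (\<Union>i<k. blk i)" using CC_blk[OF c] cBH by simp
    have "(\<Prod>i<k. F i (Phi c i)) = (\<Prod>i<k. G (ell i + 1) p (Ui H i) (Bi B i) {0})"
      unfolding F_def Phi_def cBH by (rule prod.cong) auto
    also have "\<dots> = G n p H B Xs" using main_ind[OF fB B(3) B(2) Bb] by simp
    finally show "(\<Prod>i<k. F i (Phi c i)) = G n p (snd c) (fst c) Xs" using cBH by simp
  qed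
  have S2: "card (CC Nb Nh b) = card ?T"
  proof -
    have "(\<Sum>c\<in>CC Nb Nh b. (1::nat)) = (\<Sum>f\<in>?T. 1)"
    proof (rule sum.reindex_bij_witness[where i=Psi and j=Phi])
      show "\<And>c. c \<in> CC Nb Nh b \<Longrightarrow> Psi (Phi c) = c" by (rule Psi_Phi)
      show "\<And>c. c \<in> CC Nb Nh b \<Longrightarrow> Phi c \<in> ?T" by (rule Phi_in)
      show "\<And>f. f \<in> ?T \<Longrightarrow> Phi (Psi f) = f" by (rule Phi_Psi)
      show "\<And>f. f \<in> ?T \<Longrightarrow> Psi f \<in> CC Nb Nh b" by (rule Psi_in[OF _ sb Nh])
    qed simp
    then show ?thesis by simp
  qed
  have "(\<Prod>i<k. golfCP (ell i + 1) (b i) (b i + 1) p (\<lambda>B H Y. Y = {0}) (\<lambda>B H Y. 0 \<in> H))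
     = (\<Prod>i<k. (\<Sum>c\<in>SC b i. F i c) / real (card (SC b i)))" using R by simp
  also have "\<dots> = (\<Prod>i<k. \<Sum>c\<in>SC b i. F i c) / (\<Prod>i<k. real (card (SC b i)))" by (rule prod_dividef)
  also have "(\<Prod>i<k. \<Sum>c\<in>SC b i. F i c) = (\<Sum>f\<in>?T. \<Prod>i<k. F i (f i))"
    by (rule prod_sum_PiE) (auto simp: SC_finite)
  also have "(\<Prod>i<k. real (card (SC b i))) = real (card ?T)"
    by (simp add: card_PiE)
  finally show ?thesis unfolding L S1 S2 by simp
qed

end

lemma canon_mod: "x < n \<Longrightarrow> canon_pi n x mod n = x"
  unfolding canon_pi_def by auto

lemma canon_range: "x < n \<Longrightarrow> 1 \<le> canon_pi n x \<and> canon_pi n x \<le> n"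
  unfolding canon_pi_def by auto

lemma canon_of_mod: "1 \<le> c \<Longrightarrow> c \<le> n \<Longrightarrow> canon_pi n (c mod n) = c"
  unfolding canon_pi_def by (cases "c = n") auto

lemma canon_inj: "inj_on (canon_pi n) {..<n}"
  by (rule inj_onI) (auto simp: canon_pi_def split: if_splits)

locale linkctx =
  fixes n K :: nat and X :: "nat set"
  assumes n1: "n \<ge> 1" and Xn: "X \<subseteq> {..<n}" and cX: "card X = K" and K1: "K \<ge> 1"
begin

definition L where "L = sorted_list_of_set (canon_pi n ` X)"
definition c where "c j = L ! j"
definition a where "a i = (if i = 0 then int (c (K - 1)) - int n else int (c (i - 1)))"

lemma fX: "finite X" using finite_subset[OF Xn] by simp

lemma lenL: "length L = K"
proof -
  have "card (canon_pi n ` X) = K" using card_image[OF inj_on_subset[OF canon_inj Xn]] cX by simp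
  then show ?thesis unfolding L_def using fX by simp
qed

lemma setL: "set L = canon_pi n ` X" unfolding L_def using fX by simp

lemma c_range: "j < K \<Longrightarrow> 1 \<le> c j \<and> c j \<le> n"
proof -
  assume "j < K"
  then have "c j \<in> canon_pi n ` X" unfolding c_def using setL lenL nth_mem by metis
  then show ?thesis using canon_range Xn by auto
qed

lemma c_mono: "i < j \<Longrightarrow> j < K \<Longrightarrow> c i < c j"
  unfolding c_def using sorted_wrt_nth_less[OF strict_sorted_list_of_set[of "canon_pi n ` X"]] lenL L_def by auto

lemma geom: "geom n K a"
proof
  show "n \<ge> 1" by (rule n1)
  show "K \<ge> 1" by (rule K1)
  show "a K = a 0 + int n" using K1 unfolding a_def by simp
  fix i assume i: "i < K"
  show "a i < a (Suc i)"
  proof (cases "i = 0")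
    case True
    then show ?thesis using c_range[of "K - 1"] c_range[of 0] K1 unfolding a_def by simp
  next
    case False
    then show ?thesis using c_mono[of "i - 1" i] i unfolding a_def by simp
  qed
qed

lemma xlist_nth: "j < K \<Longrightarrow> xlist n X ! j = c j mod n"
  unfolding xlist_def c_def L_def[symmetric] using lenL by simp

lemma idx: "i < K \<Longrightarrow> (i + K - 1) mod K = (if i = 0 then K - 1 else i - 1)"
proof -
  assume i: "i < K"
  show ?thesis
  proof (cases "i = 0")
    case True then show ?thesis using K1 by simp
  next
    case False
    then have "i + K - 1 = (i - 1) + K" by simp
    moreover have "((i - 1) + K) mod K = i - 1" using i by simp
    ultimately show ?thesis using False by simp
  qed
qed

lemma xpt_c: "i < K \<Longrightarrow> xpt n X i = c (if i = 0 then K - 1 else i - 1) mod n"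
  unfolding xpt_def cX using idx xlist_nth K1 by auto

lemma xpt_eq: "i < K \<Longrightarrow> xpt n X i = pos n (a i)"
proof -
  assume i: "i < K"
  have "int (xpt n X i) = int (c (if i = 0 then K - 1 else i - 1) mod n)" using xpt_c[OF i] by simp
  also have "\<dots> = a i mod int n" unfolding a_def by (simp add: zmod_int)
  finally show ?thesis unfolding pos_def by simp
qed

lemma canon_xpt: "i < K \<Longrightarrow> int (canon_pi n (xpt n X i)) = a i + (if i = 0 then int n else 0)"
proof -
  assume i: "i < K"
  have r: "1 \<le> c (if i = 0 then K - 1 else i - 1) \<and> c (if i = 0 then K - 1 else i - 1) \<le> n"
    using c_range i K1 by auto
  show ?thesis unfolding xpt_c[OF i] canon_of_mod[OF conjunct1[OF r] conjunct2[OF r]] a_def by simp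
qed

lemma canon_xpt_next: "i < K \<Longrightarrow> int (canon_pi n (xpt n X ((i + 1) mod card X))) = a (Suc i)"
proof -
  assume i: "i < K"
  show ?thesis
  proof (cases "Suc i < K")
    case True
    then show ?thesis using canon_xpt[OF True] cX unfolding a_def by simp
  next
    case False
    then have "Suc i = K" using i by simp
    then have "(i + 1) mod card X = 0" using cX by simp
    then show ?thesis using canon_xpt[of 0] K1 \<open>Suc i = K\<close> unfolding a_def by simp
  qed
qed

lemma Delta_eq: "i < K \<Longrightarrow> Delta n X i = nat (a (Suc i) - a i - 1)"
proof -
  assume i: "i < K"
  interpret g: geom n K a by (rule geom)
  have r1: "a i < a (Suc i)" using g.amono[OF i] .
  have r2: "a (Suc i) - a i \<le> int n" using g.a_le[of 0 i] g.a_le[of "Suc i" K] i g.aend by simp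
  have "(a (Suc i) - (a i + (if i = 0 then int n else 0)) - 1) mod int n = a (Suc i) - a i - 1"
  proof -
    have "(a (Suc i) - (a i + (if i = 0 then int n else 0)) - 1) mod int n = (a (Suc i) - a i - 1) mod int n"
    proof (cases "i = 0")
      case True
      have e: "a (Suc i) - (a i + (if i = 0 then int n else 0)) - 1 = a (Suc i) - a i - 1 - int n" using True by simp
      show ?thesis unfolding e by (rule minus_mod_self2)
    qed simp
    also have "\<dots> = a (Suc i) - a i - 1" using r1 r2 by (intro mod_pos_pos_trivial) auto
    finally show ?thesis .
  qed
  then show ?thesis unfolding Delta_def canon_xpt_next[OF i] canon_xpt[OF i] by simp
qed

lemma block_eq: "i < K \<Longrightarrow> block n X i = (\<lambda>t. pos n (a i + int t)) ` {1..Delta n X i}"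
proof -
  assume i: "i < K"
  have "(xpt n X i + j) mod n = pos n (a i + int j)" for j
  proof -
    have "int ((xpt n X i + j) mod n) = (a i mod int n + int j) mod int n"
      using xpt_eq[OF i] n1 by (simp add: zmod_int pos_def)
    also have "\<dots> = (a i + int j) mod int n" by (rule mod_add_left_eq)
    finally show ?thesis unfolding pos_def by simp
  qed
  then show ?thesis unfolding block_def by auto
qed

lemma Xs_eq: "(\<lambda>i. pos n (a i)) ` {..<K} = X"
proof -
  have "(\<lambda>i. pos n (a i)) ` {..<K} = (\<lambda>i. xpt n X i) ` {..<K}" using xpt_eq by auto
  also have "\<dots> = (\<lambda>j. c j mod n) ` {..<K}"
  proof
    show "(\<lambda>i. xpt n X i) ` {..<K} \<subseteq> (\<lambda>j. c j mod n) ` {..<K}"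
      using xpt_c K1 by auto
    show "(\<lambda>j. c j mod n) ` {..<K} \<subseteq> (\<lambda>i. xpt n X i) ` {..<K}"
    proof
      fix v assume "v \<in> (\<lambda>j. c j mod n) ` {..<K}"
      then obtain j where j: "j < K" "v = c j mod n" by auto
      show "v \<in> (\<lambda>i. xpt n X i) ` {..<K}"
      proof (cases "j = K - 1")
        case True then show ?thesis using j xpt_c[of 0] K1 by (intro image_eqI[of _ _ 0]) auto
      next
        case False
        then have "Suc j < K" using j by simp
        then show ?thesis using j xpt_c[of "Suc j"] by (intro image_eqI[of _ _ "Suc j"]) auto
      qed
    qed
  qed
  also have "\<dots> = (\<lambda>v. v mod n) ` set L"
    unfolding c_def using lenL by (auto simp: in_set_conv_nth image_iff) (metis nth_mem)
  also have "\<dots> = X"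
  proof -
    have "(\<lambda>v. v mod n) ` set L = (\<lambda>x. canon_pi n x mod n) ` X" unfolding setL image_image ..
    also have "\<dots> = (\<lambda>x. x) ` X" using canon_mod Xn by (intro image_cong) auto
    finally show ?thesis by simp
  qed
  finally show ?thesis .
qed

end

theorem mainTheorem11:
  fixes n Nb Nh :: nat and p :: real and X :: "nat set" and b :: "nat \<Rightarrow> nat"
  assumes "n \<ge> 1" and "Nb \<le> Nh" and "Nb + Nh \<le> n"
    and "0 \<le> p" and "p \<le> 1"
    and "Nh - Nb > 0"
    and "X \<subseteq> {..<n}" and "card X = Nh - Nb"
    and "(\<Sum>i<Nh - Nb. b i) = Nb"
    and "\<forall>i<Nh - Nb. 2 * b i \<le> Delta n X i"
  shows "golfCP n Nb Nh p (\<lambda>B H Y. Y = X)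
           (\<lambda>B H Y. X \<subseteq> H \<and> (\<forall>i<Nh - Nb. card (B \<inter> block n X i) = b i
                                            \<and> card (H \<inter> block n X i) = b i))
         = (\<Prod>i<Nh - Nb. golfCP (Delta n X i + 1) (b i) (b i + 1) p (\<lambda>B H Y. Y = {0})
                                   (\<lambda>B H Y. 0 \<in> H))
       \<and> (\<Prod>i<Nh - Nb. golfCP (Delta n X i + 1) (b i) (b i + 1) p (\<lambda>B H Y. Y = {0})
                                   (\<lambda>B H Y. 0 \<in> H))
         = (\<Prod>i<Nh - Nb. 1 / real (b i + 1))"
proof -
  note A = assms
  define K where "K = Nh - Nb"
  have K1: "K \<ge> 1" using A(6) K_def by simp
  interpret lc: linkctx n K X using A(1,7,8) K1 K_def by unfold_locales auto
  interpret g: geom n K lc.a by (rule lc.geom)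
  have Xs: "g.Xs = X" unfolding g.Xs_def using lc.Xs_eq .
  have ell: "Delta n X i = g.ell i" if "i < K" for i
    unfolding g.ell_def using lc.Delta_eq[OF that] .
  have blk: "block n X i = g.blk i" if "i < K" for i
    unfolding g.blk_def g.psi_def using lc.block_eq[OF that] ell[OF that] by simp
  have condeq: "(\<lambda>B H Y. X \<subseteq> H \<and> (\<forall>i<Nh - Nb. card (B \<inter> block n X i) = b i \<and> card (H \<inter> block n X i) = b i))
      = (\<lambda>B H Y. g.Cond b B H)"
    unfolding g.Cond_def Xs K_def[symmetric] using blk by (intro ext) auto
  have sb: "(\<Sum>i<K. b i) = Nb" using A(9) K_def by simp
  have Nh: "Nh = K + Nb" using A(2) K_def by simp
  have eq1: "golfCP n Nb Nh p (\<lambda>B H Y. Y = X)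
           (\<lambda>B H Y. X \<subseteq> H \<and> (\<forall>i<Nh - Nb. card (B \<inter> block n X i) = b i
                                            \<and> card (H \<inter> block n X i) = b i))
         = (\<Prod>i<Nh - Nb. golfCP (Delta n X i + 1) (b i) (b i + 1) p (\<lambda>B H Y. Y = {0})
                                   (\<lambda>B H Y. 0 \<in> H))"
  proof -
    have "(\<Prod>i<K. golfCP (g.ell i + 1) (b i) (b i + 1) p (\<lambda>B H Y. Y = {0}) (\<lambda>B H Y. 0 \<in> H))
        = (\<Prod>i<K. golfCP (Delta n X i + 1) (b i) (b i + 1) p (\<lambda>B H Y. Y = {0}) (\<lambda>B H Y. 0 \<in> H))"
      by (rule prod.cong[OF refl]) (simp add: ell)
    then show ?thesis unfolding condeq using g.geom_main[OF A(4,5) sb Nh] Xs unfolding K_def[symmetric] by simp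
  qed
  have eq2: "(\<Prod>i<Nh - Nb. golfCP (Delta n X i + 1) (b i) (b i + 1) p (\<lambda>B H Y. Y = {0})
                                   (\<lambda>B H Y. 0 \<in> H))
         = (\<Prod>i<Nh - Nb. 1 / real (b i + 1))"
  proof (rule prod.cong[OF refl])
    fix i assume "i \<in> {..<Nh - Nb}"
    then have "Delta n X i + 1 \<ge> 2 * b i + 1" using A(10) by auto
    then show "golfCP (Delta n X i + 1) (b i) (b i + 1) p (\<lambda>B H Y. Y = {0}) (\<lambda>B H Y. 0 \<in> H) = 1 / real (b i + 1)"
      by (rule small_cycle[OF _ A(4,5)])
  qed
  show ?thesis using eq1 eq2 by simp
qed

end
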